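(* For every countable ordinal $\beta\ge1$ and every finite $m\ge1$, $\mathsf{rk}(\mathbb Z\cdot\omega^\beta\cdot m)=\omega\cdot(1+\beta)+\lfloor\log_2 m\rfloor$, where $1+\beta$ denotes ordinal addition with $1$ on the left.
   Context: For an ordinal $\alpha$, $\mathbb Z\cdot\alpha$ denotes the linear order consisting of $\alpha$ consecutive copies of $(\mathbb Z,<)$: the lexicographic order on $\alpha\times\mathbb Z$ comparing first the $\alpha$-coordinate. Let $\mathcal F$ be the class of finite linear orders (language $\{<\}$); countable linear orders are the structures considered; substructures are suborders and $\mathsf{age}(X)$ is the set of finite suborders of $X$. For $A\le B$, $B$ is a prime extension of $A$ if $|B\setminus A|=1$; a realization of $B$ in $X$ (where $A\le X$) is $C\le X$ with $A\le C$ and an order-isomorphism $B\to C$ fixing $A$ pointwise. For $F\in\mathsf{age}(X)$ define by recursion: $\mathsf{rk}_X(F)\ge0$ always; $\mathsf{rk}_X(F)\ge\gamma+1$ iff every prime extension $B\in\mathcal F$ of $F$ has a realization $C$ in $X$ with $\mathsf{rk}_X(C)\ge\gamma$; for limit $\gamma$, $\mathsf{rk}_X(F)\ge\gamma$ iff $\mathsf{rk}_X(F)\ge\delta$ for all $\delta<\gamma$. $\mathsf{rk}_X(F)=\sup\{\gamma:\mathsf{rk}_X(F)\ge\gamma\}$ (or $\infty$ if this holds for all ordinals), and $\mathsf{rk}(X)=\mathsf{rk}_X(\emptyset)$. *)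

theory Defs
  imports Complex_Main "HOL-Library.Countable_Set"
begin

definition strict_linear_on :: "'a set \<Rightarrow> ('a \<Rightarrow> 'a \<Rightarrow> bool) \<Rightarrow> bool" where
  "strict_linear_on A lt \<longleftrightarrow>
     (\<forall>x\<in>A. \<not> lt x x) \<and>
     (\<forall>x\<in>A. \<forall>y\<in>A. \<forall>z\<in>A. lt x y \<longrightarrow> lt y z \<longrightarrow> lt x z) \<and>
     (\<forall>x\<in>A. \<forall>y\<in>A. x \<noteq> y \<longrightarrow> lt x y \<or> lt y x)"

text \<open>age: finite suborders (identified with their carriers, with the induced order).\<close>
definition age :: "'a set \<Rightarrow> 'a set set" where
  "age Xc = {F. F \<subseteq> Xc \<and> finite F}"

definition prime_ext :: "('a \<Rightarrow> 'a \<Rightarrow> bool) \<Rightarrow> 'a set \<Rightarrow> 'a set \<Rightarrow> ('a \<Rightarrow> 'a \<Rightarrow> bool) \<Rightarrow> bool" where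
  "prime_ext lt F Bc ltB \<longleftrightarrow>
     finite Bc \<and> strict_linear_on Bc ltB \<and> F \<subseteq> Bc \<and>
     (\<forall>x\<in>F. \<forall>y\<in>F. ltB x y \<longleftrightarrow> lt x y) \<and> card (Bc - F) = 1"

definition realizes :: "'a set \<Rightarrow> ('a \<Rightarrow> 'a \<Rightarrow> bool) \<Rightarrow> 'a set \<Rightarrow> 'a set \<Rightarrow> ('a \<Rightarrow> 'a \<Rightarrow> bool) \<Rightarrow> 'a set \<Rightarrow> bool" where
  "realizes Xc lt F Bc ltB C \<longleftrightarrow>
     F \<subseteq> C \<and> C \<subseteq> Xc \<and>
     (\<exists>h. bij_betw h Bc C \<and> (\<forall>x\<in>F. h x = x) \<and>
          (\<forall>x\<in>Bc. \<forall>y\<in>Bc. ltB x y \<longleftrightarrow> lt (h x) (h y)))"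

text \<open>Successor step: given the set T of F with rk >= gamma, the set of F with rk >= gamma+1.\<close>
definition ext_step :: "'a set \<Rightarrow> ('a \<Rightarrow> 'a \<Rightarrow> bool) \<Rightarrow> 'a set set \<Rightarrow> 'a set set" where
  "ext_step Xc lt T =
     {F \<in> age Xc. \<forall>Bc ltB. prime_ext lt F Bc ltB \<longrightarrow>
                      (\<exists>C. realizes Xc lt F Bc ltB C \<and> C \<in> T)}"

definition is_pred :: "'o rel \<Rightarrow> 'o \<Rightarrow> 'o \<Rightarrow> bool" where
  "is_pred r b a \<longleftrightarrow> (b, a) \<in> r \<and> b \<noteq> a \<and>
     (\<forall>c. (b, c) \<in> r \<and> (c, a) \<in> r \<longrightarrow> c = b \<or> c = a)"

text \<open>For a point a of the well-order r, rank_levels X r a is the set of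
  F in age X with rk_X(F) >= (order type of the r-predecessors of a).\<close>
definition rank_levels :: "'a set \<Rightarrow> ('a \<Rightarrow> 'a \<Rightarrow> bool) \<Rightarrow> 'o rel \<Rightarrow> 'o \<Rightarrow> 'a set set" where
  "rank_levels Xc lt r = wfrec (r - Id)
     (\<lambda>f a. if (\<exists>b. is_pred r b a) then ext_step Xc lt (f (THE b. is_pred r b a))
            else age Xc \<inter> \<Inter> {f b | b. (b, a) \<in> r - Id})"

text \<open>alpha + k (k extra points on top).\<close>
definition ord_plus_nat :: "'c rel \<Rightarrow> nat \<Rightarrow> ('c + nat) rel" where
  "ord_plus_nat r k =
     {(Inl a, Inl b) | a b. (a, b) \<in> r} \<union>
     {(Inl a, Inr j) | a j. a \<in> Field r \<and> j < k} \<union>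
     {(Inr i, Inr j) | i j. i \<le> j \<and> j < k}"

text \<open>1 + alpha (one point below).\<close>
definition one_plus :: "'c rel \<Rightarrow> 'c option rel" where
  "one_plus r =
     {(None, None)} \<union> {(None, Some b) | b. b \<in> Field r} \<union>
     {(Some a, Some b) | a b. (a, b) \<in> r}"

text \<open>omega * alpha: alpha consecutive copies of omega.\<close>
definition omega_times :: "'c rel \<Rightarrow> ('c \<times> nat) rel" where
  "omega_times r =
     {((a, n), (b, k)) | a b n k. a \<in> Field r \<and> b \<in> Field r \<and>
        (((a, b) \<in> r \<and> a \<noteq> b) \<or> (a = b \<and> n \<le> k))}"

text \<open>alpha * m: m consecutive copies of alpha.\<close>
definition ord_times_nat :: "'c rel \<Rightarrow> nat \<Rightarrow> (nat \<times> 'c) rel" where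
  "ord_times_nat r m =
     {((i, a), (j, b)) | i j a b. i < m \<and> j < m \<and> a \<in> Field r \<and> b \<in> Field r \<and>
        (i < j \<or> (i = j \<and> (a, b) \<in> r))}"

text \<open>omega ^ beta: finitely supported functions Field beta -> nat, compared at the
  beta-largest argument where they differ.\<close>
definition fin_supp :: "'b rel \<Rightarrow> ('b \<Rightarrow> nat) set" where
  "fin_supp r = {f. finite {x. f x \<noteq> 0} \<and> (\<forall>x. x \<notin> Field r \<longrightarrow> f x = 0)}"

definition omega_exp :: "'b rel \<Rightarrow> ('b \<Rightarrow> nat) rel" where
  "omega_exp r =
     {(f, g) | f g. f \<in> fin_supp r \<and> g \<in> fin_supp r \<and>
        (f = g \<or> (\<exists>x\<in>Field r. f x < g x \<and>
                    (\<forall>y\<in>Field r. (x, y) \<in> r \<and> y \<noteq> x \<longrightarrow> f y = g y)))}"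

definition Z_carrier :: "'c rel \<Rightarrow> ('c \<times> int) set" where
  "Z_carrier r = Field r \<times> UNIV"

definition Z_less :: "'c rel \<Rightarrow> ('c \<times> int) \<Rightarrow> ('c \<times> int) \<Rightarrow> bool" where
  "Z_less r p q \<longleftrightarrow>
     ((fst p, fst q) \<in> r \<and> fst p \<noteq> fst q) \<or> (fst p = fst q \<and> snd p < snd q)"

text \<open>rk_X(F) >= gamma, for a well-order gamma: evaluate the recursion at the
  top point of gamma + 1.\<close>
definition rank_ge :: "'a set \<Rightarrow> ('a \<Rightarrow> 'a \<Rightarrow> bool) \<Rightarrow> 'a set \<Rightarrow> 'o rel \<Rightarrow> bool" where
  "rank_ge Xc lt F g \<longleftrightarrow> F \<in> rank_levels Xc lt (ord_plus_nat g 1) (Inr 0)"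

text \<open>rk_X(F) = alpha, i.e. alpha = sup {gamma. rk_X(F) >= gamma}, for a countable
  ordinal alpha; gamma and upper bounds range over countable ordinals (well-orders
  on subsets of nat).  If rk_X(F) is uncountable or infinite this is false.\<close>
definition rank_is :: "'a set \<Rightarrow> ('a \<Rightarrow> 'a \<Rightarrow> bool) \<Rightarrow> 'a set \<Rightarrow> 'o rel \<Rightarrow> bool" where
  "rank_is Xc lt F alpha \<longleftrightarrow>
     (\<forall>g :: nat rel. Well_order g \<longrightarrow> rank_ge Xc lt F g \<longrightarrow> (g, alpha) \<in> ordLeq) \<and>
     (\<forall>d :: nat rel. Well_order d \<longrightarrow>
        (\<forall>g :: nat rel. Well_order g \<longrightarrow> rank_ge Xc lt F g \<longrightarrow> (g, d) \<in> ordLeq) \<longrightarrow> (alpha, d) \<in> ordLeq)"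

definition rank_of_is :: "'a set \<Rightarrow> ('a \<Rightarrow> 'a \<Rightarrow> bool) \<Rightarrow> 'o rel \<Rightarrow> bool" where
  "rank_of_is Xc lt alpha \<longleftrightarrow> rank_is Xc lt {} alpha"

end

theory Submission
  imports Defs
begin


section \<open>Generic well-order facts\<close>

lemma WO_refl: "Well_order r \<Longrightarrow> x \<in> Field r \<Longrightarrow> (x, x) \<in> r"
  by (rule refl_onD[OF wo_rel.REFL[unfolded wo_rel_def]])

lemma WO_trans: "Well_order r \<Longrightarrow> (x, y) \<in> r \<Longrightarrow> (y, z) \<in> r \<Longrightarrow> (x, z) \<in> r"
  by (rule transD[OF wo_rel.TRANS[unfolded wo_rel_def]])

lemma WO_antisym: "Well_order r \<Longrightarrow> (x, y) \<in> r \<Longrightarrow> (y, x) \<in> r \<Longrightarrow> x = y"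
  by (rule antisymD[OF wo_rel.ANTISYM[unfolded wo_rel_def]])

lemma WO_total: assumes "Well_order r" "x \<in> Field r" "y \<in> Field r" shows "(x, y) \<in> r \<or> (y, x) \<in> r"
  using wo_rel.TOTALS[unfolded wo_rel_def, OF assms(1)] assms(2,3) by blast

lemma WO_wf: "Well_order r \<Longrightarrow> wf (r - Id)"
  by (rule wo_rel.WF[unfolded wo_rel_def])

lemma FieldI1: "(x, y) \<in> r \<Longrightarrow> x \<in> Field r" by (auto simp: Field_def)
lemma FieldI2: "(x, y) \<in> r \<Longrightarrow> y \<in> Field r" by (auto simp: Field_def)

lemma is_predD1: "is_pred r b a \<Longrightarrow> (b, a) \<in> r" unfolding is_pred_def by simp
lemma is_predD2: "is_pred r b a \<Longrightarrow> b \<noteq> a" unfolding is_pred_def by simp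
lemma is_predD3: "is_pred r b a \<Longrightarrow> (b, c) \<in> r \<Longrightarrow> (c, a) \<in> r \<Longrightarrow> c = b \<or> c = a"
  unfolding is_pred_def by blast
lemma is_predI: "(b, a) \<in> r \<Longrightarrow> b \<noteq> a \<Longrightarrow> (\<And>c. (b, c) \<in> r \<Longrightarrow> (c, a) \<in> r \<Longrightarrow> c = b \<or> c = a) \<Longrightarrow> is_pred r b a"
  unfolding is_pred_def by blast

lemma is_pred_unique:
  assumes w: "Well_order r" and p1: "is_pred r b a" and p2: "is_pred r c a" shows "b = c"
proof (rule ccontr)
  assume bc: "b \<noteq> c"
  have "b \<in> Field r" using is_predD1[OF p1] by (rule FieldI1)
  moreover have "c \<in> Field r" using is_predD1[OF p2] by (rule FieldI1)
  ultimately have "(b, c) \<in> r \<or> (c, b) \<in> r" using WO_total[OF w] by blast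
  then show False
  proof
    assume "(b, c) \<in> r"
    then have "c = b \<or> c = a" using is_predD3[OF p1 _ is_predD1[OF p2]] by blast
    then show False using bc is_predD2[OF p2] by blast
  next
    assume "(c, b) \<in> r"
    then have "b = c \<or> b = a" using is_predD3[OF p2 _ is_predD1[OF p1]] by blast
    then show False using bc is_predD2[OF p1] by blast
  qed
qed

lemma is_pred_the: "Well_order r \<Longrightarrow> is_pred r b a \<Longrightarrow> (THE b. is_pred r b a) = b"
  by (rule the_equality) (auto intro: is_pred_unique)

lemma rl_unfold:
  assumes "Well_order r"
  shows "rank_levels Xc lt r a = (if \<exists>b. is_pred r b a then ext_step Xc lt (rank_levels Xc lt r (THE b. is_pred r b a))
            else age Xc \<inter> \<Inter> {rank_levels Xc lt r b | b. (b, a) \<in> r - Id})"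
proof -
  have wf: "wf (r - Id)" using WO_wf[OF assms] .
  let ?H = "(\<lambda>f a. if (\<exists>b. is_pred r b a) then ext_step Xc lt (f (THE b. is_pred r b a))
            else age Xc \<inter> \<Inter> {f b | b. (b, a) \<in> r - Id})"
  have e: "rank_levels Xc lt r = wfrec (r - Id) ?H" unfolding rank_levels_def by (rule ext) (rule refl)
  have "rank_levels Xc lt r a = ?H (cut (rank_levels Xc lt r) (r - Id) a) a"
    unfolding e by (rule wfrec[OF wf])
  also have "\<dots> = ?H (rank_levels Xc lt r) a"
  proof (cases "\<exists>b. is_pred r b a")
    case True
    then obtain b where b: "is_pred r b a" by blast
    have th: "(THE b. is_pred r b a) = b" using is_pred_the[OF assms b] .
    have ba: "(b, a) \<in> r - Id" using is_predD1[OF b] is_predD2[OF b] by blast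
    have "?H (cut (rank_levels Xc lt r) (r - Id) a) a = ext_step Xc lt (cut (rank_levels Xc lt r) (r - Id) a b)"
      using True th by (simp only: if_True)
    also have "\<dots> = ext_step Xc lt (rank_levels Xc lt r b)" using cut_apply[OF ba] by (rule arg_cong)
    also have "\<dots> = ?H (rank_levels Xc lt r) a"
      using True th by (simp only: if_True)
    finally show ?thesis .
  next
    case False
    have "{cut (rank_levels Xc lt r) (r - Id) a b | b. (b, a) \<in> r - Id} = {rank_levels Xc lt r b | b. (b, a) \<in> r - Id}"
      using cut_apply[of _ a "r - Id" "rank_levels Xc lt r"] by (metis (no_types, lifting))
    then show ?thesis using False by (simp only: if_False)
  qed
  finally show ?thesis .
qed

lemma rl_pred:
  assumes w: "Well_order r" and p: "is_pred r b a"
  shows "rank_levels Xc lt r a = ext_step Xc lt (rank_levels Xc lt r b)"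
proof -
  have ex: "\<exists>b. is_pred r b a" using p by blast
  have "rank_levels Xc lt r a = ext_step Xc lt (rank_levels Xc lt r (THE b. is_pred r b a))"
    by (rule trans[OF rl_unfold[OF w]]) (rule if_P[OF ex])
  then show ?thesis unfolding is_pred_the[OF w p] .
qed

lemma rl_lim:
  assumes w: "Well_order r" and np: "\<not> (\<exists>b. is_pred r b a)"
  shows "rank_levels Xc lt r a = age Xc \<inter> \<Inter> {rank_levels Xc lt r b | b. (b, a) \<in> r - Id}"
  by (rule trans[OF rl_unfold[OF w]]) (rule if_not_P[OF np])

lemma ext_step_mono: "T \<subseteq> T' \<Longrightarrow> ext_step Xc lt T \<subseteq> ext_step Xc lt T'"
  unfolding ext_step_def by blast

lemma ext_step_age: "ext_step Xc lt T \<subseteq> age Xc"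
  unfolding ext_step_def by blast

lemma rl_ext_sub:
  assumes w: "Well_order r"
  shows "ext_step Xc lt (rank_levels Xc lt r u) \<subseteq> rank_levels Xc lt r u"
  using WO_wf[OF w]
proof (induction u rule: wf_induct_rule)
  case (less u)
  show ?case
  proof (cases "\<exists>b. is_pred r b u")
    case True
    then obtain v where v: "is_pred r v u" by blast
    have vu: "(v, u) \<in> r - Id" using is_predD1[OF v] is_predD2[OF v] by blast
    have e: "rank_levels Xc lt r u = ext_step Xc lt (rank_levels Xc lt r v)" using rl_pred[OF w v] .
    have "rank_levels Xc lt r u \<subseteq> rank_levels Xc lt r v" unfolding e using less.IH[OF vu] .
    then have "ext_step Xc lt (rank_levels Xc lt r u) \<subseteq> ext_step Xc lt (rank_levels Xc lt r v)"
      by (rule ext_step_mono)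
    then show ?thesis unfolding e[symmetric] .
  next
    case False
    have L: "rank_levels Xc lt r u = age Xc \<inter> \<Inter> {rank_levels Xc lt r b | b. (b, u) \<in> r - Id}"
      using rl_lim[OF w False] .
    have "ext_step Xc lt (rank_levels Xc lt r u) \<subseteq> rank_levels Xc lt r b" if bu: "(b, u) \<in> r - Id" for b
    proof -
      have "rank_levels Xc lt r u \<subseteq> rank_levels Xc lt r b" unfolding L using bu by blast
      then have "ext_step Xc lt (rank_levels Xc lt r u) \<subseteq> ext_step Xc lt (rank_levels Xc lt r b)"
        by (rule ext_step_mono)
      also have "\<dots> \<subseteq> rank_levels Xc lt r b" using less.IH[OF bu] .
      finally show ?thesis .
    qed
    then have "ext_step Xc lt (rank_levels Xc lt r u) \<subseteq> \<Inter> {rank_levels Xc lt r b | b. (b, u) \<in> r - Id}"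
      by blast
    then show ?thesis unfolding L using ext_step_age by blast
  qed
qed

lemma rl_mono:
  assumes w: "Well_order r" and ab0: "(a, b) \<in> r"
  shows "rank_levels Xc lt r b \<subseteq> rank_levels Xc lt r a"
  using WO_wf[OF w] ab0
proof (induction b arbitrary: a rule: wf_induct_rule)
  case (less b)
  show ?case
  proof (cases "a = b")
    case True then show ?thesis by simp
  next
    case ab: False
    show ?thesis
    proof (cases "\<exists>c. is_pred r c b")
      case True
      then obtain v where v: "is_pred r v b" by blast
      have vb: "(v, b) \<in> r - Id" using is_predD1[OF v] is_predD2[OF v] by blast
      have av: "(a, v) \<in> r"
      proof -
        have "a \<in> Field r" using less.prems by (rule FieldI1)
        moreover have "v \<in> Field r" using is_predD1[OF v] by (rule FieldI1)
        ultimately have "(a, v) \<in> r \<or> (v, a) \<in> r" using WO_total[OF w] by blast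
        moreover have "(v, a) \<in> r \<Longrightarrow> a = v"
          using is_predD3[OF v _ less.prems] ab by blast
        ultimately show ?thesis using WO_refl[OF w] \<open>a \<in> Field r\<close> by blast
      qed
      have "rank_levels Xc lt r b = ext_step Xc lt (rank_levels Xc lt r v)" using rl_pred[OF w v] .
      also have "\<dots> \<subseteq> rank_levels Xc lt r v" by (rule rl_ext_sub[OF w])
      also have "\<dots> \<subseteq> rank_levels Xc lt r a" using less.IH[OF vb av] .
      finally show ?thesis .
    next
      case False
      have "(a, b) \<in> r - Id" using less.prems ab by blast
      then show ?thesis unfolding rl_lim[OF w False] by blast
    qed
  qed
qed

lemma rl_transfer:
  assumes wr: "Well_order r" and ws: "Well_order s"
    and Ad: "\<And>x y. x \<in> A \<Longrightarrow> (y, x) \<in> r \<Longrightarrow> y \<in> A"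
    and inj: "inj_on f A"
    and fd: "\<And>x y. x \<in> A \<Longrightarrow> (y, f x) \<in> s \<Longrightarrow> y \<in> f ` A"
    and ord: "\<And>x y. x \<in> A \<Longrightarrow> y \<in> A \<Longrightarrow> (x, y) \<in> r \<longleftrightarrow> (f x, f y) \<in> s"
    and aA: "a \<in> A"
  shows "rank_levels Xc lt r a = rank_levels Xc lt s (f a)"
  using WO_wf[OF wr] aA
proof (induction a rule: wf_induct_rule)
  case (less a)
  have aA: "a \<in> A" using less.prems .
  have injD: "x = y" if "x \<in> A" "y \<in> A" "f x = f y" for x y
    using inj that unfolding inj_on_def by blast
  have predeq: "is_pred r b a \<longleftrightarrow> is_pred s (f b) (f a)" if bA: "b \<in> A" for b
  proof
    assume p: "is_pred r b a"
    show "is_pred s (f b) (f a)"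
    proof (rule is_predI)
      show "(f b, f a) \<in> s" using is_predD1[OF p] ord[OF bA aA] by blast
      show "f b \<noteq> f a" using is_predD2[OF p] injD[OF bA aA] by blast
      fix c' assume c1: "(f b, c') \<in> s" and c2: "(c', f a) \<in> s"
      obtain c where c: "c \<in> A" "c' = f c" using fd[OF aA c2] by blast
      have "(b, c) \<in> r" using c1 c ord[OF bA c(1)] by blast
      moreover have "(c, a) \<in> r" using c2 c ord[OF c(1) aA] by blast
      ultimately have "c = b \<or> c = a" using is_predD3[OF p] by blast
      then show "c' = f b \<or> c' = f a" using c by blast
    qed
  next
    assume p: "is_pred s (f b) (f a)"
    show "is_pred r b a"
    proof (rule is_predI)
      show "(b, a) \<in> r" using is_predD1[OF p] ord[OF bA aA] by blast
      show "b \<noteq> a" using is_predD2[OF p] by blast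
      fix c assume c1: "(b, c) \<in> r" and c2: "(c, a) \<in> r"
      have cA: "c \<in> A" using Ad[OF aA c2] .
      have "(f b, f c) \<in> s" using c1 ord[OF bA cA] by blast
      moreover have "(f c, f a) \<in> s" using c2 ord[OF cA aA] by blast
      ultimately have "f c = f b \<or> f c = f a" using is_predD3[OF p] by blast
      then show "c = b \<or> c = a" using injD[OF cA bA] injD[OF cA aA] by blast
    qed
  qed
  show ?case
  proof (cases "\<exists>b. is_pred r b a")
    case True
    then obtain b where b: "is_pred r b a" by blast
    have bA: "b \<in> A" using Ad[OF aA is_predD1[OF b]] .
    have ba: "(b, a) \<in> r - Id" using is_predD1[OF b] is_predD2[OF b] by blast
    have pb: "is_pred s (f b) (f a)" using predeq[OF bA] b by blast
    have "rank_levels Xc lt r a = ext_step Xc lt (rank_levels Xc lt r b)" using rl_pred[OF wr b] .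
    also have "\<dots> = ext_step Xc lt (rank_levels Xc lt s (f b))" using less.IH[OF ba bA] by simp
    also have "\<dots> = rank_levels Xc lt s (f a)" by (rule sym[OF rl_pred[OF ws pb]])
    finally show ?thesis .
  next
    case False
    have F2: "\<not> (\<exists>b'. is_pred s b' (f a))"
    proof
      assume "\<exists>b'. is_pred s b' (f a)"
      then obtain b' where b': "is_pred s b' (f a)" by blast
      then obtain b where bA: "b \<in> A" and bb: "b' = f b" using fd[OF aA is_predD1[OF b']] by blast
      have "is_pred r b a" using predeq[OF bA] b' bb by blast
      then show False using False by blast
    qed
    have "{rank_levels Xc lt r b | b. (b, a) \<in> r - Id} = {rank_levels Xc lt s b' | b'. (b', f a) \<in> s - Id}"
    proof (intro set_eqI iffI)
      fix S assume "S \<in> {rank_levels Xc lt r b | b. (b, a) \<in> r - Id}"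
      then obtain b where b: "(b, a) \<in> r - Id" and Sb: "S = rank_levels Xc lt r b" by blast
      have bA: "b \<in> A" using Ad[OF aA] b by blast
      have "(f b, f a) \<in> s" using b ord[OF bA aA] by blast
      moreover have "f b \<noteq> f a" using b injD[OF bA aA] by blast
      moreover have "S = rank_levels Xc lt s (f b)" using Sb less.IH[OF b bA] by simp
      ultimately show "S \<in> {rank_levels Xc lt s b' | b'. (b', f a) \<in> s - Id}" by blast
    next
      fix S assume "S \<in> {rank_levels Xc lt s b' | b'. (b', f a) \<in> s - Id}"
      then obtain b' where b': "(b', f a) \<in> s - Id" and Sb: "S = rank_levels Xc lt s b'" by blast
      then obtain b where bA: "b \<in> A" and bb: "b' = f b" using fd[OF aA] by blast
      have ba: "(b, a) \<in> r - Id" using b' bb ord[OF bA aA] by auto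
      have "S = rank_levels Xc lt r b" using Sb bb less.IH[OF ba bA] by simp
      then show "S \<in> {rank_levels Xc lt r b | b. (b, a) \<in> r - Id}" using ba by blast
    qed
    then show ?thesis unfolding rl_lim[OF wr False] rl_lim[OF ws F2] by simp
  qed
qed

lemma WO_min_above:
  assumes w: "Well_order r" and ac: "(a, c) \<in> r" "a \<noteq> c"
  obtains s where "(a, s) \<in> r" "a \<noteq> s" "\<And>y. (a, y) \<in> r \<Longrightarrow> y \<noteq> a \<Longrightarrow> (s, y) \<in> r"
proof -
  let ?Q = "{y. (a, y) \<in> r \<and> y \<noteq> a}"
  have cQ: "c \<in> ?Q" using ac by blast
  have "\<exists>z\<in>?Q. \<forall>y. (y, z) \<in> r - Id \<longrightarrow> y \<notin> ?Q"
    using wf_eq_minimal[THEN iffD1, OF WO_wf[OF w], rule_format, OF cQ] .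
  then obtain s where sQ: "s \<in> ?Q" and smin: "\<And>y. (y, s) \<in> r - Id \<Longrightarrow> y \<notin> ?Q"
    by blast
  have smin2: "(s, y) \<in> r" if y: "(a, y) \<in> r" "y \<noteq> a" for y
  proof -
    have sF: "s \<in> Field r" using sQ by (auto intro: FieldI2)
    have yF: "y \<in> Field r" using y(1) by (rule FieldI2)
    have "(s, y) \<in> r \<or> (y, s) \<in> r" using WO_total[OF w sF yF] .
    moreover have "(y, s) \<in> r \<Longrightarrow> y = s" using smin[of y] y by blast
    ultimately show ?thesis using WO_refl[OF w sF] by blast
  qed
  show ?thesis
  proof (rule that)
    show "(a, s) \<in> r" using sQ by simp
    show "a \<noteq> s" using sQ by auto
    fix y assume "(a, y) \<in> r" "y \<noteq> a"
    then show "(s, y) \<in> r" by (rule smin2)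
  qed
qed

lemma WO_succ_exists:
  assumes w: "Well_order r" and ac: "(a, c) \<in> r" "a \<noteq> c"
  shows "\<exists>s. is_pred r a s \<and> (s, c) \<in> r"
proof -
  obtain s where s1: "(a, s) \<in> r" and s2: "a \<noteq> s" and smin: "\<And>y. (a, y) \<in> r \<Longrightarrow> y \<noteq> a \<Longrightarrow> (s, y) \<in> r"
    using WO_min_above[OF w ac] by metis
  have "is_pred r a s"
  proof (rule is_predI[OF s1 s2])
    fix d assume d1: "(a, d) \<in> r" and d2: "(d, s) \<in> r"
    show "d = a \<or> d = s"
    proof (cases "d = a")
      case False
      then have "(s, d) \<in> r" using smin d1 by blast
      then show ?thesis using WO_antisym[OF w d2] by blast
    qed simp
  qed
  moreover have "(s, c) \<in> r" using smin ac by blast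
  ultimately show ?thesis by blast
qed

lemma WO_lim_char:
  assumes w: "Well_order r" and np: "\<not> (\<exists>b. is_pred r b a)" and aF: "a \<in> Field r" and xF: "x \<in> Field r"
    and h: "\<And>v. (v, a) \<in> r - Id \<Longrightarrow> (v, x) \<in> r"
  shows "(a, x) \<in> r"
proof (rule ccontr)
  assume na: "(a, x) \<notin> r"
  have xa: "(x, a) \<in> r" using WO_total[OF w aF xF] na by blast
  have xa2: "x \<noteq> a" using na WO_refl[OF w aF] by blast
  obtain s where ps: "is_pred r x s" and sa: "(s, a) \<in> r" using WO_succ_exists[OF w xa xa2] by blast
  have "s \<noteq> a" using ps np by blast
  then have "(s, x) \<in> r" using h sa by blast
  then show False using WO_antisym[OF w is_predD1[OF ps]] is_predD2[OF ps] by blast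
qed

lemma WO_pred_char:
  assumes w: "Well_order r" and p: "is_pred r u a" and xF: "x \<in> Field r"
  shows "(a, x) \<in> r \<longleftrightarrow> (u, x) \<in> r \<and> u \<noteq> x"
proof
  assume ax: "(a, x) \<in> r"
  have ua: "(u, a) \<in> r" "u \<noteq> a" using is_predD1[OF p] is_predD2[OF p] by auto
  have "(u, x) \<in> r" using WO_trans[OF w ua(1) ax] .
  moreover have "u \<noteq> x"
  proof
    assume "u = x"
    then have "(a, u) \<in> r" using ax by simp
    then show False using WO_antisym[OF w ua(1)] ua(2) by blast
  qed
  ultimately show "(u, x) \<in> r \<and> u \<noteq> x" by blast
next
  assume ux: "(u, x) \<in> r \<and> u \<noteq> x"
  have aF: "a \<in> Field r" using is_predD1[OF p] by (rule FieldI2)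
  show "(a, x) \<in> r"
  proof (rule ccontr)
    assume nax: "(a, x) \<notin> r"
    then have "(x, a) \<in> r" using WO_total[OF w aF xF] by blast
    then have "x = u \<or> x = a" using is_predD3[OF p] ux by blast
    then show False using ux nax WO_refl[OF w xF] by blast
  qed
qed


section \<open>Extended points, gaps\<close>

datatype 'a ext = Bot | Pt 'a | Top

fun elt :: "('a \<Rightarrow> 'a \<Rightarrow> bool) \<Rightarrow> 'a ext \<Rightarrow> 'a ext \<Rightarrow> bool" where
  "elt lt Bot y = (y \<noteq> Bot)"
| "elt lt (Pt x) Bot = False"
| "elt lt (Pt x) (Pt y) = lt x y"
| "elt lt (Pt x) Top = True"
| "elt lt Top y = False"

lemma elt_Bot2[simp]: "\<not> elt lt e Bot" by (cases e) auto
lemma elt_Top2[simp]: "elt lt e Top \<longleftrightarrow> e \<noteq> Top" by (cases e) auto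

definition exts :: "'a set \<Rightarrow> 'a ext set" where
  "exts F = {Bot, Top} \<union> Pt ` F"

definition gaps :: "('a \<Rightarrow> 'a \<Rightarrow> bool) \<Rightarrow> 'a set \<Rightarrow> ('a ext \<times> 'a ext) set" where
  "gaps lt F = {(e1, e2). e1 \<in> exts F \<and> e2 \<in> exts F \<and> elt lt e1 e2 \<and>
      (\<forall>x\<in>F. \<not> (elt lt e1 (Pt x) \<and> elt lt (Pt x) e2))}"

lemma sl_irrefl: "strict_linear_on A lt \<Longrightarrow> x \<in> A \<Longrightarrow> \<not> lt x x"
  unfolding strict_linear_on_def by blast
lemma sl_trans: "strict_linear_on A lt \<Longrightarrow> x \<in> A \<Longrightarrow> y \<in> A \<Longrightarrow> z \<in> A \<Longrightarrow> lt x y \<Longrightarrow> lt y z \<Longrightarrow> lt x z"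
  unfolding strict_linear_on_def by blast
lemma sl_total: "strict_linear_on A lt \<Longrightarrow> x \<in> A \<Longrightarrow> y \<in> A \<Longrightarrow> x \<noteq> y \<Longrightarrow> lt x y \<or> lt y x"
  unfolding strict_linear_on_def by blast
lemma sl_asym: "strict_linear_on A lt \<Longrightarrow> x \<in> A \<Longrightarrow> y \<in> A \<Longrightarrow> lt x y \<Longrightarrow> \<not> lt y x"
  using sl_irrefl sl_trans by metis

lemma exts_cases: "e \<in> exts A \<Longrightarrow> e = Bot \<or> e = Top \<or> (\<exists>x\<in>A. e = Pt x)"
  unfolding exts_def by blast

lemma Pt_exts[simp]: "Pt x \<in> exts A \<longleftrightarrow> x \<in> A"
  unfolding exts_def by auto
lemma Bot_exts[simp]: "Bot \<in> exts A" unfolding exts_def by auto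
lemma Top_exts[simp]: "Top \<in> exts A" unfolding exts_def by auto

lemma exts_mono: "A \<subseteq> B \<Longrightarrow> exts A \<subseteq> exts B"
  unfolding exts_def by auto

lemma elt_irrefl:
  assumes sl: "strict_linear_on A lt" and e: "e \<in> exts A"
  shows "\<not> elt lt e e"
proof (cases e)
  case (Pt x)
  then show ?thesis using e sl_irrefl[OF sl, of x] by simp
qed auto

lemma elt_trans:
  assumes sl: "strict_linear_on A lt" and e: "e1 \<in> exts A" "e2 \<in> exts A" "e3 \<in> exts A"
    and h: "elt lt e1 e2" "elt lt e2 e3"
  shows "elt lt e1 e3"
proof (cases e1)
  case Bot
  then show ?thesis using h by (cases e3) auto
next
  case Top
  then show ?thesis using h by simp
next
  case (Pt x)
  show ?thesis
  proof (cases e3)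
    case Bot
    then show ?thesis using h by (cases e2) auto
  next
    case Top
    then show ?thesis using Pt by simp
  next
    case (Pt z)
    note z = this
    show ?thesis
    proof (cases e2)
      case Bot then show ?thesis using h \<open>e1 = Pt x\<close> by simp
    next
      case Top then show ?thesis using h z by simp
    next
      case (Pt y)
      have "x \<in> A" "y \<in> A" "z \<in> A" using e \<open>e1 = Pt x\<close> Pt z by auto
      moreover have "lt x y" "lt y z" using h \<open>e1 = Pt x\<close> Pt z by auto
      ultimately have "lt x z" using sl_trans[OF sl] by blast
      then show ?thesis using \<open>e1 = Pt x\<close> z by simp
    qed
  qed
qed

lemma elt_total:
  assumes sl: "strict_linear_on A lt" and e: "e1 \<in> exts A" "e2 \<in> exts A" and ne: "e1 \<noteq> e2"
  shows "elt lt e1 e2 \<or> elt lt e2 e1"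
proof (cases e1)
  case Bot then show ?thesis using ne by simp
next
  case Top then show ?thesis using ne by (cases e2) auto
next
  case (Pt x)
  show ?thesis
  proof (cases e2)
    case (Pt y)
    have "x \<in> A" "y \<in> A" "x \<noteq> y" using e ne \<open>e1 = Pt x\<close> Pt by auto
    then have "lt x y \<or> lt y x" using sl_total[OF sl] by blast
    then show ?thesis using \<open>e1 = Pt x\<close> Pt by simp
  qed (use \<open>e1 = Pt x\<close> in auto)
qed

lemma elt_asym:
  assumes sl: "strict_linear_on A lt" and e: "e1 \<in> exts A" "e2 \<in> exts A" and h: "elt lt e1 e2"
  shows "\<not> elt lt e2 e1"
  using elt_trans[OF sl e(1) e(2) e(1) h] elt_irrefl[OF sl e(1)] by blast

lemma finite_max_lt:
  assumes sl: "strict_linear_on X lt" and fin: "finite A" and ne: "A \<noteq> {}" and sub: "A \<subseteq> X"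
  shows "\<exists>a\<in>A. \<forall>x\<in>A. x = a \<or> lt x a"
  using fin ne sub
proof (induction A rule: finite_ne_induct)
  case (singleton x) then show ?case by blast
next
  case (insert x F)
  then obtain a where a: "a \<in> F" "\<forall>y\<in>F. y = a \<or> lt y a" by blast
  have xX: "x \<in> X" and aX: "a \<in> X" using insert a by auto
  have "x \<noteq> a" using insert a by blast
  then have "lt x a \<or> lt a x" using sl_total[OF sl xX aX] by blast
  then show ?case
  proof
    assume "lt x a" then show ?thesis using a by blast
  next
    assume ax: "lt a x"
    have "\<forall>y\<in>insert x F. y = x \<or> lt y x"
    proof
      fix y assume y: "y \<in> insert x F"
      show "y = x \<or> lt y x"
      proof (cases "y = x")
        case False
        then have yF: "y \<in> F" using y by blast
        then have yX: "y \<in> X" using insert by blast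
        have "y = a \<or> lt y a" using a yF by blast
        then show ?thesis using ax sl_trans[OF sl yX aX xX] by blast
      qed simp
    qed
    then show ?thesis by blast
  qed
qed

lemma finite_min_lt:
  assumes sl: "strict_linear_on X lt" and fin: "finite A" and ne: "A \<noteq> {}" and sub: "A \<subseteq> X"
  shows "\<exists>a\<in>A. \<forall>x\<in>A. x = a \<or> lt a x"
proof -
  have sl': "strict_linear_on X (\<lambda>x y. lt y x)" using sl unfolding strict_linear_on_def by blast
  show ?thesis using finite_max_lt[OF sl' fin ne sub] by blast
qed

lemma mid_Pt: "elt lt e1 d \<Longrightarrow> elt lt d e3 \<Longrightarrow> d \<in> exts F \<Longrightarrow> \<exists>x\<in>F. d = Pt x"
  by (cases d) auto

lemma gapsD:
  assumes "(e1, e2) \<in> gaps lt F"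
  shows "e1 \<in> exts F" "e2 \<in> exts F" "elt lt e1 e2" "\<And>x. x \<in> F \<Longrightarrow> elt lt e1 (Pt x) \<Longrightarrow> elt lt (Pt x) e2 \<Longrightarrow> False"
  using assms unfolding gaps_def by auto

lemma gapsI:
  assumes "e1 \<in> exts F" "e2 \<in> exts F" "elt lt e1 e2" "\<And>x. x \<in> F \<Longrightarrow> elt lt e1 (Pt x) \<Longrightarrow> elt lt (Pt x) e2 \<Longrightarrow> False"
  shows "(e1, e2) \<in> gaps lt F"
  using assms unfolding gaps_def by auto

lemma gap_unique:
  assumes sl: "strict_linear_on Xc lt" and FX: "F \<subseteq> Xc" and cX: "c \<in> Xc"
    and g: "(e1, e2) \<in> gaps lt F" and d: "(d1, d2) \<in> gaps lt F"
    and c1: "elt lt e1 (Pt c)" and c2: "elt lt (Pt c) e2"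
    and c3: "elt lt d1 (Pt c)" and c4: "elt lt (Pt c) d2"
  shows "e1 = d1 \<and> e2 = d2"
proof -
  have EX: "exts F \<subseteq> exts Xc" using exts_mono[OF FX] .
  have e1X: "e1 \<in> exts Xc" and e2X: "e2 \<in> exts Xc" using gapsD(1,2)[OF g] EX by auto
  have d1X: "d1 \<in> exts Xc" and d2X: "d2 \<in> exts Xc" using gapsD(1,2)[OF d] EX by auto
  have cX': "Pt c \<in> exts Xc" using cX by simp
  have "e1 = d1"
  proof (rule ccontr)
    assume ne: "e1 \<noteq> d1"
    then have "elt lt e1 d1 \<or> elt lt d1 e1" using elt_total[OF sl e1X d1X] by blast
    then show False
    proof
      assume h: "elt lt e1 d1"
      obtain x where x: "x \<in> F" "d1 = Pt x" using mid_Pt[OF h c3 gapsD(1)[OF d]] by blast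
      have "elt lt (Pt x) e2" using elt_trans[OF sl d1X cX' e2X] c3 c2 x by simp
      then show False using gapsD(4)[OF g x(1)] h x by simp
    next
      assume h: "elt lt d1 e1"
      obtain x where x: "x \<in> F" "e1 = Pt x" using mid_Pt[OF h c1 gapsD(1)[OF g]] by blast
      have "elt lt (Pt x) d2" using elt_trans[OF sl e1X cX' d2X] c1 c4 x by simp
      then show False using gapsD(4)[OF d x(1)] h x by simp
    qed
  qed
  moreover have "e2 = d2"
  proof (rule ccontr)
    assume ne: "e2 \<noteq> d2"
    then have "elt lt e2 d2 \<or> elt lt d2 e2" using elt_total[OF sl e2X d2X] by blast
    then show False
    proof
      assume h: "elt lt e2 d2"
      obtain x where x: "x \<in> F" "e2 = Pt x" using mid_Pt[OF c2 h gapsD(2)[OF g]] by blast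
      have "elt lt d1 (Pt x)" using elt_trans[OF sl d1X cX' e2X] c3 c2 x by simp
      then show False using gapsD(4)[OF d x(1)] h x by simp
    next
      assume h: "elt lt d2 e2"
      obtain x where x: "x \<in> F" "d2 = Pt x" using mid_Pt[OF c4 h gapsD(2)[OF d]] by blast
      have "elt lt e1 (Pt x)" using elt_trans[OF sl e1X cX' d2X] c1 c4 x by simp
      then show False using gapsD(4)[OF g x(1)] h x by simp
    qed
  qed
  ultimately show ?thesis by blast
qed

lemma gap_notin:
  assumes "(e1, e2) \<in> gaps lt F" "elt lt e1 (Pt c)" "elt lt (Pt c) e2"
  shows "c \<notin> F"
  using gapsD(4)[OF assms(1)] assms(2,3) by blast

lemma gaps_insert:
  assumes sl: "strict_linear_on Xc lt" and FX: "F \<subseteq> Xc" and cX: "c \<in> Xc"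
    and g: "(e1, e2) \<in> gaps lt F" and c1: "elt lt e1 (Pt c)" and c2: "elt lt (Pt c) e2"
  shows "gaps lt (insert c F) = (gaps lt F - {(e1, e2)}) \<union> {(e1, Pt c), (Pt c, e2)}"
proof -
  have EX: "exts F \<subseteq> exts Xc" using exts_mono[OF FX] .
  have EX2: "exts (insert c F) \<subseteq> exts Xc" using exts_mono FX cX by (metis insert_subset)
  have EI: "exts (insert c F) = insert (Pt c) (exts F)" unfolding exts_def by auto
  have e1X: "e1 \<in> exts Xc" and e2X: "e2 \<in> exts Xc" using gapsD(1,2)[OF g] EX by auto
  have cX': "Pt c \<in> exts Xc" using cX by simp
  have cF: "c \<notin> F" using gap_notin[OF g c1 c2] .
  show ?thesis
  proof (intro set_eqI iffI)
    fix p assume p: "p \<in> gaps lt (insert c F)"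
    obtain d1 d2 where pd: "p = (d1, d2)" by (cases p)
    have d: "(d1, d2) \<in> gaps lt (insert c F)" using p pd by simp
    have d1E: "d1 \<in> insert (Pt c) (exts F)" and d2E: "d2 \<in> insert (Pt c) (exts F)"
      using gapsD(1,2)[OF d] EI by auto
    have d1X: "d1 \<in> exts Xc" and d2X: "d2 \<in> exts Xc" using gapsD(1,2)[OF d] EX2 by auto
    have d12: "elt lt d1 d2" using gapsD(3)[OF d] .
    show "p \<in> (gaps lt F - {(e1, e2)}) \<union> {(e1, Pt c), (Pt c, e2)}"
    proof (cases "d1 = Pt c")
      case True
      have "d2 \<noteq> Pt c" using d12 True elt_irrefl[OF sl cX'] by blast
      then have d2F: "d2 \<in> exts F" using d2E by blast
      have "d2 = e2"
      proof (rule ccontr)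
        assume ne: "d2 \<noteq> e2"
        then have "elt lt d2 e2 \<or> elt lt e2 d2" using elt_total[OF sl d2X e2X] by blast
        then show False
        proof
          assume h: "elt lt d2 e2"
          have h1: "elt lt (Pt c) d2" using d12 True by simp
          obtain x where x: "x \<in> F" "d2 = Pt x" using mid_Pt[OF h1 h d2F] by blast
          have "elt lt e1 (Pt x)" using elt_trans[OF sl e1X cX' d2X c1 h1] x by simp
          then show False using gapsD(4)[OF g x(1)] h x by simp
        next
          assume h: "elt lt e2 d2"
          obtain y where y: "y \<in> F" "e2 = Pt y" using mid_Pt[OF c2 h gapsD(2)[OF g]] by blast
          have yI: "y \<in> insert c F" using y by simp
          show False using gapsD(4)[OF d yI] c2 h y True by simp
        qed
      qed
      then show ?thesis using pd True by simp
    next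
      case d1c: False
      show ?thesis
      proof (cases "d2 = Pt c")
        case True
        have d1F: "d1 \<in> exts F" using d1E d1c by blast
        have "d1 = e1"
        proof (rule ccontr)
          assume ne: "d1 \<noteq> e1"
          then have "elt lt d1 e1 \<or> elt lt e1 d1" using elt_total[OF sl d1X e1X] by blast
          then show False
          proof
            assume h: "elt lt e1 d1"
            have h1: "elt lt d1 (Pt c)" using d12 True by simp
            obtain x where x: "x \<in> F" "d1 = Pt x" using mid_Pt[OF h h1 d1F] by blast
            have "elt lt (Pt x) e2" using elt_trans[OF sl d1X cX' e2X h1 c2] x by simp
            then show False using gapsD(4)[OF g x(1)] h x by simp
          next
            assume h: "elt lt d1 e1"
            obtain y where y: "y \<in> F" "e1 = Pt y" using mid_Pt[OF h c1 gapsD(1)[OF g]] by blast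
            have yI: "y \<in> insert c F" using y by simp
            show False using gapsD(4)[OF d yI] c1 h y True by simp
          qed
        qed
        then show ?thesis using pd True by simp
      next
        case d2c: False
        have d1F: "d1 \<in> exts F" using d1E d1c by blast
        have d2F: "d2 \<in> exts F" using d2E d2c by blast
        have dF: "(d1, d2) \<in> gaps lt F"
          by (rule gapsI[OF d1F d2F d12]) (use gapsD(4)[OF d] in auto)
        have "(d1, d2) \<noteq> (e1, e2)"
        proof
          assume "(d1, d2) = (e1, e2)"
          then show False using gapsD(4)[OF d, of c] c1 c2 by simp
        qed
        then show ?thesis using dF pd by blast
      qed
    qed
  next
    fix p assume p: "p \<in> (gaps lt F - {(e1, e2)}) \<union> {(e1, Pt c), (Pt c, e2)}"
    then consider (old) "p \<in> gaps lt F" "p \<noteq> (e1, e2)" | (l) "p = (e1, Pt c)" | (r) "p = (Pt c, e2)" by blast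
    then show "p \<in> gaps lt (insert c F)"
    proof cases
      case old
      obtain d1 d2 where pd: "p = (d1, d2)" by (cases p)
      have d: "(d1, d2) \<in> gaps lt F" using old pd by simp
      show ?thesis unfolding pd
      proof (rule gapsI)
        show "d1 \<in> exts (insert c F)" "d2 \<in> exts (insert c F)" using gapsD(1,2)[OF d] EI by auto
        show "elt lt d1 d2" using gapsD(3)[OF d] .
        fix x assume x: "x \<in> insert c F" and x1: "elt lt d1 (Pt x)" and x2: "elt lt (Pt x) d2"
        show False
        proof (cases "x = c")
          case True
          have "e1 = d1 \<and> e2 = d2" using gap_unique[OF sl FX cX g d c1 c2] x1 x2 True by simp
          then show False using old pd by simp
        next
          case False
          then show False using gapsD(4)[OF d, of x] x x1 x2 by simp
        qed
      qed
    next
      case l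
      show ?thesis unfolding l
      proof (rule gapsI)
        show "e1 \<in> exts (insert c F)" "Pt c \<in> exts (insert c F)" using gapsD(1)[OF g] EI by auto
        show "elt lt e1 (Pt c)" using c1 .
        fix x assume x: "x \<in> insert c F" and x1: "elt lt e1 (Pt x)" and x2: "elt lt (Pt x) (Pt c)"
        show False
        proof (cases "x = c")
          case True
          then show False using x2 elt_irrefl[OF sl cX'] by simp
        next
          case False
          then have xF: "x \<in> F" using x by simp
          then have xX': "Pt x \<in> exts Xc" using FX by auto
          have "elt lt (Pt x) e2" using elt_trans[OF sl xX' cX' e2X x2 c2] .
          then show False using gapsD(4)[OF g xF] x1 by simp
        qed
      qed
    next
      case r
      show ?thesis unfolding r
      proof (rule gapsI)
        show "Pt c \<in> exts (insert c F)" "e2 \<in> exts (insert c F)" using gapsD(2)[OF g] EI by auto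
        show "elt lt (Pt c) e2" using c2 .
        fix x assume x: "x \<in> insert c F" and x1: "elt lt (Pt c) (Pt x)" and x2: "elt lt (Pt x) e2"
        show False
        proof (cases "x = c")
          case True
          then show False using x2 x1 elt_irrefl[OF sl cX'] by simp
        next
          case False
          then have xF: "x \<in> F" using x by simp
          then have xX': "Pt x \<in> exts Xc" using FX by auto
          have "elt lt e1 (Pt x)" using elt_trans[OF sl e1X cX' xX' c1 x1] .
          then show False using gapsD(4)[OF g xF] x2 by simp
        qed
      qed
    qed
  qed
qed

lemma PE1:
  fixes Xc :: "'x set"
  assumes sl: "strict_linear_on Xc lt" and FX: "F \<subseteq> Xc" and fin: "finite F" and inf: "infinite (UNIV :: 'x set)"
    and H: "\<forall>Bc ltB. prime_ext lt F Bc ltB \<longrightarrow> (\<exists>C. realizes Xc lt F Bc ltB C \<and> C \<in> T)"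
    and g: "(e1, e2) \<in> gaps lt F"
  shows "\<exists>c\<in>Xc. elt lt e1 (Pt c) \<and> elt lt (Pt c) e2 \<and> insert c F \<in> T"
proof -
  obtain p :: 'x where pF: "p \<notin> F" using ex_new_if_finite[OF inf fin] by blast
  have EX: "exts F \<subseteq> exts Xc" using exts_mono[OF FX] .
  have e1X: "e1 \<in> exts Xc" and e2X: "e2 \<in> exts Xc" using gapsD(1,2)[OF g] EX by auto
  define ltB where "ltB x y = (if x = p then y \<noteq> p \<and> \<not> elt lt (Pt y) e2 else if y = p then elt lt (Pt x) e2 else lt x y)" for x y
  let ?Bc = "insert p F"
  have ptX: "Pt x \<in> exts Xc" if "x \<in> F" for x using that FX by auto
  have slB: "strict_linear_on ?Bc ltB"
    unfolding strict_linear_on_def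
  proof (intro conjI ballI impI)
    fix x assume x: "x \<in> ?Bc"
    show "\<not> ltB x x"
    proof (cases "x = p")
      case False
      then have "x \<in> Xc" using x FX by auto
      then show ?thesis using sl_irrefl[OF sl] False unfolding ltB_def by simp
    qed (simp add: ltB_def)
  next
    fix x y z assume x: "x \<in> ?Bc" and y: "y \<in> ?Bc" and z: "z \<in> ?Bc" and xy: "ltB x y" and yz: "ltB y z"
    show "ltB x z"
    proof (cases "x = p")
      case xp: True
      show ?thesis
      proof (cases "y = p")
        case True then show ?thesis using xy xp unfolding ltB_def by simp
      next
        case yp: False
        then have yF: "y \<in> F" using y by simp
        have ny: "\<not> elt lt (Pt y) e2" using xy xp yp unfolding ltB_def by simp
        show ?thesis
        proof (cases "z = p")
          case True
          then have "elt lt (Pt y) e2" using yz yp unfolding ltB_def by simp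
          then show ?thesis using ny by simp
        next
          case zp: False
          then have zF: "z \<in> F" using z by simp
          have "lt y z" using yz yp zp unfolding ltB_def by simp
          then have "elt lt (Pt y) (Pt z)" by simp
          then have "\<not> elt lt (Pt z) e2" using ny elt_trans[OF sl ptX[OF yF] ptX[OF zF] e2X] by blast
          then show ?thesis using xp zp unfolding ltB_def by simp
        qed
      qed
    next
      case xp: False
      then have xF: "x \<in> F" using x by simp
      show ?thesis
      proof (cases "y = p")
        case yp: True
        then have zp: "z \<noteq> p" using yz unfolding ltB_def by simp
        then have zF: "z \<in> F" using z by simp
        have x2: "elt lt (Pt x) e2" using xy xp yp unfolding ltB_def by simp
        have z2: "\<not> elt lt (Pt z) e2" using yz yp unfolding ltB_def by simp
        have xz: "x \<noteq> z" using x2 z2 by blast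
        have "lt x z \<or> lt z x" using sl_total[OF sl _ _ xz] xF zF FX by blast
        moreover have "\<not> lt z x"
        proof
          assume "lt z x"
          then have "elt lt (Pt z) (Pt x)" by simp
          then show False using z2 x2 elt_trans[OF sl ptX[OF zF] ptX[OF xF] e2X] by blast
        qed
        ultimately show ?thesis using xp zp unfolding ltB_def by simp
      next
        case yp: False
        then have yF: "y \<in> F" using y by simp
        have lxy: "lt x y" using xy xp yp unfolding ltB_def by simp
        show ?thesis
        proof (cases "z = p")
          case True
          have "elt lt (Pt y) e2" using yz yp True unfolding ltB_def by simp
          then have "elt lt (Pt x) e2" using lxy elt_trans[OF sl ptX[OF xF] ptX[OF yF] e2X] by simp
          then show ?thesis using xp True unfolding ltB_def by simp
        next
          case zp: False
          then have zF: "z \<in> F" using z by simp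
          have "lt y z" using yz yp zp unfolding ltB_def by simp
          then have "lt x z" using lxy sl_trans[OF sl] xF yF zF FX by blast
          then show ?thesis using xp zp unfolding ltB_def by simp
        qed
      qed
    qed
  next
    fix x y assume x: "x \<in> ?Bc" and y: "y \<in> ?Bc" and xy: "x \<noteq> y"
    show "ltB x y \<or> ltB y x"
    proof (cases "x = p")
      case True
      then show ?thesis using xy unfolding ltB_def by auto
    next
      case xp: False
      show ?thesis
      proof (cases "y = p")
        case True then show ?thesis using xp unfolding ltB_def by auto
      next
        case yp: False
        have "lt x y \<or> lt y x" using sl_total[OF sl _ _ xy] x y xp yp FX by auto
        then show ?thesis using xp yp unfolding ltB_def by auto
      qed
    qed
  qed
  have pe: "prime_ext lt F ?Bc ltB"
    unfolding prime_ext_def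
  proof (intro conjI)
    show "finite ?Bc" using fin by simp
    show "strict_linear_on ?Bc ltB" using slB .
    show "F \<subseteq> ?Bc" by blast
    show "\<forall>x\<in>F. \<forall>y\<in>F. ltB x y = lt x y" using pF unfolding ltB_def by auto
    have "?Bc - F = {p}" using pF by blast
    then show "card (?Bc - F) = 1" by simp
  qed
  obtain C where R: "realizes Xc lt F ?Bc ltB C" and CT: "C \<in> T" using H pe by blast
  obtain h where hb: "bij_betw h ?Bc C" and hF: "\<forall>x\<in>F. h x = x"
    and ho: "\<forall>x\<in>?Bc. \<forall>y\<in>?Bc. ltB x y \<longleftrightarrow> lt (h x) (h y)"
    using R unfolding realizes_def by blast
  have CX: "C \<subseteq> Xc" using R unfolding realizes_def by blast
  define c where "c = h p"
  have Cimg: "C = h ` ?Bc" using hb unfolding bij_betw_def by simp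
  have "h ` ?Bc = insert c F" using hF unfolding c_def by auto
  then have Ceq: "C = insert c F" using Cimg by simp
  have cX: "c \<in> Xc" using Ceq CX by blast
  have c1: "elt lt e1 (Pt c)"
  proof (cases e1)
    case Bot then show ?thesis by simp
  next
    case Top then show ?thesis using gapsD(3)[OF g] by simp
  next
    case (Pt x)
    then have xF: "x \<in> F" using gapsD(1)[OF g] by simp
    have "ltB x p" using Pt gapsD(3)[OF g] xF pF unfolding ltB_def by auto
    then have "lt (h x) (h p)" using ho xF by blast
    then show ?thesis using Pt hF xF unfolding c_def by simp
  qed
  have c2: "elt lt (Pt c) e2"
  proof (cases e2)
    case Bot then show ?thesis using gapsD(3)[OF g] by simp
  next
    case Top then show ?thesis by simp
  next
    case (Pt y)
    then have yF: "y \<in> F" using gapsD(2)[OF g] by simp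
    have "\<not> lt y y" using sl_irrefl[OF sl] yF FX by blast
    then have "ltB p y" using Pt yF pF unfolding ltB_def by auto
    then have "lt (h p) (h y)" using ho yF by blast
    then show ?thesis using Pt hF yF unfolding c_def by simp
  qed
  show ?thesis using cX c1 c2 CT Ceq by blast
qed

lemma PE2:
  assumes sl: "strict_linear_on Xc lt" and FX: "F \<subseteq> Xc" and fin: "finite F"
    and G: "\<forall>(e1, e2)\<in>gaps lt F. \<exists>c\<in>Xc. elt lt e1 (Pt c) \<and> elt lt (Pt c) e2 \<and> insert c F \<in> T"
    and pe: "prime_ext lt F Bc ltB"
  shows "\<exists>C. realizes Xc lt F Bc ltB C \<and> C \<in> T"
proof -
  have slB: "strict_linear_on Bc ltB" and FB: "F \<subseteq> Bc" and agree: "\<forall>x\<in>F. \<forall>y\<in>F. ltB x y \<longleftrightarrow> lt x y"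
    and card1: "card (Bc - F) = 1" using pe unfolding prime_ext_def by auto
  obtain p where p: "Bc - F = {p}" using card_1_singletonE[OF card1] by blast
  have pB: "p \<in> Bc" and pF: "p \<notin> F" using p by auto
  have Bc: "Bc = insert p F" using p FB by blast
  define D where "D = {x\<in>F. ltB x p}"
  define U where "U = {x\<in>F. \<not> ltB x p}"
  have xB: "x \<in> Bc" if "x \<in> F" for x using that FB by blast
  have DU: "x \<in> U \<longleftrightarrow> ltB p x" if xF: "x \<in> F" for x
  proof -
    have xp: "x \<noteq> p" using xF pF by blast
    have "ltB x p \<or> ltB p x" using sl_total[OF slB xB[OF xF] pB xp] .
    moreover have "ltB x p \<Longrightarrow> \<not> ltB p x" using sl_asym[OF slB xB[OF xF] pB] by blast
    ultimately show ?thesis unfolding U_def using xF by blast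
  qed
  have ptX: "Pt x \<in> exts Xc" if "x \<in> F" for x using that FX by auto
  obtain e1 where e1E: "e1 \<in> exts F" and e1D: "\<forall>x\<in>D. Pt x = e1 \<or> elt lt (Pt x) e1"
    and e1c: "e1 = Bot \<or> (\<exists>a\<in>D. e1 = Pt a)"
  proof (cases "D = {}")
    case True
    then show ?thesis using that[of Bot] by simp
  next
    case False
    have "finite D" "D \<subseteq> Xc" using fin FX unfolding D_def by auto
    then obtain a where a: "a \<in> D" "\<forall>x\<in>D. x = a \<or> lt x a" using finite_max_lt[OF sl _ False] by blast
    have "a \<in> F" using a unfolding D_def by simp
    then show ?thesis using that[of "Pt a"] a by auto
  qed
  obtain e2 where e2E: "e2 \<in> exts F" and e2U: "\<forall>x\<in>U. Pt x = e2 \<or> elt lt e2 (Pt x)"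
    and e2c: "e2 = Top \<or> (\<exists>b\<in>U. e2 = Pt b)"
  proof (cases "U = {}")
    case True
    then show ?thesis using that[of Top] by simp
  next
    case False
    have "finite U" "U \<subseteq> Xc" using fin FX unfolding U_def by auto
    then obtain b where b: "b \<in> U" "\<forall>x\<in>U. x = b \<or> lt b x" using finite_min_lt[OF sl _ False] by blast
    have "b \<in> F" using b unfolding U_def by simp
    then show ?thesis using that[of "Pt b"] b by auto
  qed
  have EX: "exts F \<subseteq> exts Xc" using exts_mono[OF FX] .
  have e1X: "e1 \<in> exts Xc" and e2X: "e2 \<in> exts Xc" using e1E e2E EX by auto
  have e12: "elt lt e1 e2"
  proof -
    { assume "e1 = Bot"
      then have ?thesis using e2c by auto }
    moreover
    { assume "e2 = Top"
      then have ?thesis using e1c by auto }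
    moreover
    { fix a b assume a: "a \<in> D" "e1 = Pt a" and b: "b \<in> U" "e2 = Pt b"
      have aF: "a \<in> F" and bF: "b \<in> F" using a b unfolding D_def U_def by auto
      have "ltB a p" using a unfolding D_def by simp
      moreover have "ltB p b" using DU[OF bF] b by simp
      ultimately have "ltB a b" using sl_trans[OF slB xB[OF aF] pB xB[OF bF]] by blast
      then have "lt a b" using agree aF bF by blast
      then have ?thesis using a b by simp }
    ultimately show ?thesis using e1c e2c by blast
  qed
  have g: "(e1, e2) \<in> gaps lt F"
  proof (rule gapsI[OF e1E e2E e12])
    fix x assume xF: "x \<in> F" and x1: "elt lt e1 (Pt x)" and x2: "elt lt (Pt x) e2"
    show False
    proof (cases "x \<in> D")
      case True
      then have "Pt x = e1 \<or> elt lt (Pt x) e1" using e1D by blast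
      then show False using x1 elt_irrefl[OF sl e1X] elt_asym[OF sl ptX[OF xF] e1X] by blast
    next
      case False
      then have "x \<in> U" using xF unfolding D_def U_def by blast
      then have "Pt x = e2 \<or> elt lt e2 (Pt x)" using e2U by blast
      then show False using x2 elt_irrefl[OF sl e2X] elt_asym[OF sl ptX[OF xF] e2X] by blast
    qed
  qed
  obtain c where cX: "c \<in> Xc" and c1: "elt lt e1 (Pt c)" and c2: "elt lt (Pt c) e2" and cT: "insert c F \<in> T"
    using G g by blast
  have cX': "Pt c \<in> exts Xc" using cX by simp
  have Dc: "lt x c" if "x \<in> D" for x
  proof -
    have xF: "x \<in> F" using that unfolding D_def by simp
    have "Pt x = e1 \<or> elt lt (Pt x) e1" using e1D that by blast
    then have "elt lt (Pt x) (Pt c)" using c1 elt_trans[OF sl ptX[OF xF] e1X cX'] by blast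
    then show ?thesis by simp
  qed
  have Uc: "lt c x" if "x \<in> U" for x
  proof -
    have xF: "x \<in> F" using that unfolding U_def by simp
    have "Pt x = e2 \<or> elt lt e2 (Pt x)" using e2U that by blast
    then have "elt lt (Pt c) (Pt x)" using c2 elt_trans[OF sl cX' e2X ptX[OF xF]] by blast
    then show ?thesis by simp
  qed
  have cF: "c \<notin> F" using gap_notin[OF g c1 c2] .
  define h where "h x = (if x = p then c else x)" for x
  have "realizes Xc lt F Bc ltB (insert c F)"
    unfolding realizes_def
  proof (intro conjI exI)
    show "F \<subseteq> insert c F" by blast
    show "insert c F \<subseteq> Xc" using cX FX by blast
    show "bij_betw h Bc (insert c F)"
      unfolding bij_betw_def
    proof
      show "inj_on h Bc" unfolding inj_on_def h_def Bc using cF pF by auto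
      show "h ` Bc = insert c F" unfolding Bc h_def using pF by auto
    qed
    show "\<forall>x\<in>F. h x = x" using pF unfolding h_def by auto
    show "\<forall>x\<in>Bc. \<forall>y\<in>Bc. ltB x y = lt (h x) (h y)"
    proof (intro ballI)
      fix x y assume x: "x \<in> Bc" and y: "y \<in> Bc"
      show "ltB x y = lt (h x) (h y)"
      proof (cases "x = p")
        case xp: True
        show ?thesis
        proof (cases "y = p")
          case True
          then show ?thesis using xp sl_irrefl[OF slB pB] sl_irrefl[OF sl cX] unfolding h_def by simp
        next
          case yp: False
          then have yF: "y \<in> F" using y Bc by simp
          have hy: "h x = c" "h y = y" using xp yp unfolding h_def by auto
          have "ltB p y \<longleftrightarrow> lt c y"
          proof
            assume "ltB p y"
            then have "y \<in> U" using DU[OF yF] by simp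
            then show "lt c y" using Uc by blast
          next
            assume cy: "lt c y"
            have "y \<notin> D"
            proof
              assume "y \<in> D"
              then have "lt y c" using Dc by blast
              then show False using cy sl_asym[OF sl cX] yF FX by blast
            qed
            then have "y \<in> U" using yF unfolding D_def U_def by blast
            then show "ltB p y" using DU[OF yF] by simp
          qed
          then show ?thesis using hy xp by simp
        qed
      next
        case xp: False
        then have xF: "x \<in> F" using x Bc by simp
        show ?thesis
        proof (cases "y = p")
          case yp: True
          have hy: "h x = x" "h y = c" using xp yp unfolding h_def by auto
          have "ltB x p \<longleftrightarrow> lt x c"
          proof
            assume "ltB x p"
            then have "x \<in> D" using xF unfolding D_def by simp
            then show "lt x c" using Dc by blast
          next
            assume xc: "lt x c"
            show "ltB x p"
            proof (rule ccontr)
              assume "\<not> ltB x p"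
              then have "x \<in> U" using xF unfolding U_def by simp
              then have "lt c x" using Uc by blast
              then show False using xc sl_asym[OF sl cX] xF FX by blast
            qed
          qed
          then show ?thesis using hy yp by simp
        next
          case yp: False
          then have yF: "y \<in> F" using y Bc by simp
          have hy: "h x = x" "h y = y" using xp yp unfolding h_def by auto
          then show ?thesis using agree xF yF by simp
        qed
      qed
    qed
  qed
  then show ?thesis using cT by blast
qed

lemma PE:
  fixes Xc :: "'x set"
  assumes sl: "strict_linear_on Xc lt" and FX: "F \<subseteq> Xc" and fin: "finite F" and inf: "infinite (UNIV :: 'x set)"
  shows "(\<forall>Bc ltB. prime_ext lt F Bc ltB \<longrightarrow> (\<exists>C. realizes Xc lt F Bc ltB C \<and> C \<in> T)) \<longleftrightarrow>
         (\<forall>(e1, e2)\<in>gaps lt F. \<exists>c\<in>Xc. elt lt e1 (Pt c) \<and> elt lt (Pt c) e2 \<and> insert c F \<in> T)"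
proof
  assume H: "\<forall>Bc ltB. prime_ext lt F Bc ltB \<longrightarrow> (\<exists>C. realizes Xc lt F Bc ltB C \<and> C \<in> T)"
  show "\<forall>(e1, e2)\<in>gaps lt F. \<exists>c\<in>Xc. elt lt e1 (Pt c) \<and> elt lt (Pt c) e2 \<and> insert c F \<in> T"
  proof (intro ballI)
    fix g assume g: "g \<in> gaps lt F"
    obtain e1 e2 where ge: "g = (e1, e2)" by (cases g)
    show "case g of (e1, e2) \<Rightarrow> \<exists>c\<in>Xc. elt lt e1 (Pt c) \<and> elt lt (Pt c) e2 \<and> insert c F \<in> T"
      using PE1[OF sl FX fin inf H, of e1 e2] g ge by simp
  qed
next
  assume G: "\<forall>(e1, e2)\<in>gaps lt F. \<exists>c\<in>Xc. elt lt e1 (Pt c) \<and> elt lt (Pt c) e2 \<and> insert c F \<in> T"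
  show "\<forall>Bc ltB. prime_ext lt F Bc ltB \<longrightarrow> (\<exists>C. realizes Xc lt F Bc ltB C \<and> C \<in> T)"
    using PE2[OF sl FX fin G] by blast
qed

lemma age_insert: "F \<in> age Xc \<Longrightarrow> c \<in> Xc \<Longrightarrow> insert c F \<in> age Xc"
  unfolding age_def by auto

lemma gap_char:
  fixes Xc :: "'x set" and W :: "'o rel" and V :: "'x ext \<Rightarrow> 'x ext \<Rightarrow> 'o"
  assumes sl: "strict_linear_on Xc lt" and inf: "infinite (UNIV :: 'x set)" and w: "Well_order W"
    and VF: "\<And>e1 e2. e1 \<in> exts Xc \<Longrightarrow> e2 \<in> exts Xc \<Longrightarrow> elt lt e1 e2 \<Longrightarrow> V e1 e2 \<in> Field W"
    and S: "\<And>e1 e2 u. e1 \<in> exts Xc \<Longrightarrow> e2 \<in> exts Xc \<Longrightarrow> elt lt e1 e2 \<Longrightarrow> u \<in> Field W \<Longrightarrow>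
       ((u, V e1 e2) \<in> W \<and> u \<noteq> V e1 e2) \<longleftrightarrow>
       (\<exists>c\<in>Xc. elt lt e1 (Pt c) \<and> elt lt (Pt c) e2 \<and> (u, V e1 (Pt c)) \<in> W \<and> (u, V (Pt c) e2) \<in> W)"
    and w0F: "w0 \<in> Field W"
  shows "F \<in> rank_levels Xc lt W w0 \<longleftrightarrow> (F \<in> age Xc \<and> (\<forall>(e1, e2)\<in>gaps lt F. (w0, V e1 e2) \<in> W))"
  using WO_wf[OF w] w0F
proof (induction w0 arbitrary: F rule: wf_induct_rule)
  case (less w0)
  have gX: "e1 \<in> exts Xc \<and> e2 \<in> exts Xc \<and> elt lt e1 e2" if "F \<in> age Xc" "(e1, e2) \<in> gaps lt F" for F e1 e2
  proof -
    have "F \<subseteq> Xc" using that(1) unfolding age_def by blast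
    then show ?thesis using gapsD(1,2,3)[OF that(2)] exts_mono by blast
  qed
  show ?case
  proof (cases "\<exists>b. is_pred W b w0")
    case True
    then obtain u where u: "is_pred W u w0" by blast
    have uw: "(u, w0) \<in> W - Id" using is_predD1[OF u] is_predD2[OF u] by blast
    have uF: "u \<in> Field W" using is_predD1[OF u] by (rule FieldI1)
    have L: "rank_levels Xc lt W w0 = ext_step Xc lt (rank_levels Xc lt W u)" using rl_pred[OF w u] .
    show ?thesis
    proof (cases "F \<in> age Xc")
      case False
      then show ?thesis unfolding L ext_step_def by blast
    next
      case Fa: True
      have FX: "F \<subseteq> Xc" and fin: "finite F" using Fa unfolding age_def by auto
      have "F \<in> rank_levels Xc lt W w0 \<longleftrightarrow>
          (\<forall>Bc ltB. prime_ext lt F Bc ltB \<longrightarrow> (\<exists>C. realizes Xc lt F Bc ltB C \<and> C \<in> rank_levels Xc lt W u))"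
        unfolding L ext_step_def using Fa by blast
      also have "\<dots> \<longleftrightarrow> (\<forall>(e1, e2)\<in>gaps lt F. \<exists>c\<in>Xc. elt lt e1 (Pt c) \<and> elt lt (Pt c) e2 \<and> insert c F \<in> rank_levels Xc lt W u)"
        by (rule PE[OF sl FX fin inf])
      also have "\<dots> \<longleftrightarrow> (\<forall>(e1, e2)\<in>gaps lt F. (w0, V e1 e2) \<in> W)"
      proof
        assume A: "\<forall>(e1, e2)\<in>gaps lt F. \<exists>c\<in>Xc. elt lt e1 (Pt c) \<and> elt lt (Pt c) e2 \<and> insert c F \<in> rank_levels Xc lt W u"
        show "\<forall>(e1, e2)\<in>gaps lt F. (w0, V e1 e2) \<in> W"
        proof (intro ballI)
          fix g assume g: "g \<in> gaps lt F"
          obtain e1 e2 where ge: "g = (e1, e2)" by (cases g)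
          have g': "(e1, e2) \<in> gaps lt F" using g ge by simp
          have eX: "e1 \<in> exts Xc" "e2 \<in> exts Xc" "elt lt e1 e2" using gX[OF Fa g'] by auto
          obtain c where cX: "c \<in> Xc" and c1: "elt lt e1 (Pt c)" and c2: "elt lt (Pt c) e2"
            and cL: "insert c F \<in> rank_levels Xc lt W u" using A g' by blast
          have "\<forall>(d1, d2)\<in>gaps lt (insert c F). (u, V d1 d2) \<in> W"
            using cL less.IH[OF uw uF] by blast
          then have "(u, V e1 (Pt c)) \<in> W" "(u, V (Pt c) e2) \<in> W"
            unfolding gaps_insert[OF sl FX cX g' c1 c2] by auto
          then have "(u, V e1 e2) \<in> W \<and> u \<noteq> V e1 e2" using S[OF eX uF] cX c1 c2 by blast
          then have "(w0, V e1 e2) \<in> W" using WO_pred_char[OF w u VF[OF eX]] by blast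
          then show "case g of (e1, e2) \<Rightarrow> (w0, V e1 e2) \<in> W" using ge by simp
        qed
      next
        assume B: "\<forall>(e1, e2)\<in>gaps lt F. (w0, V e1 e2) \<in> W"
        have Bu: "(u, V e1 e2) \<in> W \<and> u \<noteq> V e1 e2" if g': "(e1, e2) \<in> gaps lt F" for e1 e2
        proof -
          have eX: "e1 \<in> exts Xc" "e2 \<in> exts Xc" "elt lt e1 e2" using gX[OF Fa g'] by auto
          show ?thesis using WO_pred_char[OF w u VF[OF eX]] B g' by blast
        qed
        show "\<forall>(e1, e2)\<in>gaps lt F. \<exists>c\<in>Xc. elt lt e1 (Pt c) \<and> elt lt (Pt c) e2 \<and> insert c F \<in> rank_levels Xc lt W u"
        proof (intro ballI)
          fix g assume g: "g \<in> gaps lt F"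
          obtain e1 e2 where ge: "g = (e1, e2)" by (cases g)
          have g': "(e1, e2) \<in> gaps lt F" using g ge by simp
          have eX: "e1 \<in> exts Xc" "e2 \<in> exts Xc" "elt lt e1 e2" using gX[OF Fa g'] by auto
          obtain c where cX: "c \<in> Xc" and c1: "elt lt e1 (Pt c)" and c2: "elt lt (Pt c) e2"
            and v1: "(u, V e1 (Pt c)) \<in> W" and v2: "(u, V (Pt c) e2) \<in> W"
            using S[OF eX uF] Bu[OF g'] by blast
          have "\<forall>(d1, d2)\<in>gaps lt (insert c F). (u, V d1 d2) \<in> W"
            unfolding gaps_insert[OF sl FX cX g' c1 c2] using v1 v2 Bu by auto
          then have "insert c F \<in> rank_levels Xc lt W u"
            using less.IH[OF uw uF] age_insert[OF Fa cX] by blast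
          then show "case g of (e1, e2) \<Rightarrow> \<exists>c\<in>Xc. elt lt e1 (Pt c) \<and> elt lt (Pt c) e2 \<and> insert c F \<in> rank_levels Xc lt W u"
            using ge cX c1 c2 by blast
        qed
      qed
      finally show ?thesis using Fa by blast
    qed
  next
    case False
    have L: "rank_levels Xc lt W w0 = age Xc \<inter> \<Inter> {rank_levels Xc lt W b | b. (b, w0) \<in> W - Id}"
      using rl_lim[OF w False] .
    have "F \<in> rank_levels Xc lt W w0 \<longleftrightarrow> F \<in> age Xc \<and> (\<forall>v. (v, w0) \<in> W - Id \<longrightarrow> F \<in> rank_levels Xc lt W v)"
      unfolding L by blast
    also have "\<dots> \<longleftrightarrow> F \<in> age Xc \<and> (\<forall>v. (v, w0) \<in> W - Id \<longrightarrow> (\<forall>(e1, e2)\<in>gaps lt F. (v, V e1 e2) \<in> W))"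
    proof -
      have "F \<in> rank_levels Xc lt W v \<longleftrightarrow> F \<in> age Xc \<and> (\<forall>(e1, e2)\<in>gaps lt F. (v, V e1 e2) \<in> W)"
        if "(v, w0) \<in> W - Id" for v
        using less.IH[OF that] that FieldI1[of v w0 W] by blast
      then show ?thesis by blast
    qed
    also have "\<dots> \<longleftrightarrow> F \<in> age Xc \<and> (\<forall>(e1, e2)\<in>gaps lt F. (w0, V e1 e2) \<in> W)"
    proof (cases "F \<in> age Xc")
      case Fa: True
      have "(\<forall>v. (v, w0) \<in> W - Id \<longrightarrow> (\<forall>(e1, e2)\<in>gaps lt F. (v, V e1 e2) \<in> W)) \<longleftrightarrow>
            (\<forall>(e1, e2)\<in>gaps lt F. (w0, V e1 e2) \<in> W)"
      proof
        assume A: "\<forall>v. (v, w0) \<in> W - Id \<longrightarrow> (\<forall>(e1, e2)\<in>gaps lt F. (v, V e1 e2) \<in> W)"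
        show "\<forall>(e1, e2)\<in>gaps lt F. (w0, V e1 e2) \<in> W"
        proof (intro ballI)
          fix g assume g: "g \<in> gaps lt F"
          obtain e1 e2 where ge: "g = (e1, e2)" by (cases g)
          have g': "(e1, e2) \<in> gaps lt F" using g ge by simp
          have eX: "e1 \<in> exts Xc" "e2 \<in> exts Xc" "elt lt e1 e2" using gX[OF Fa g'] by auto
          have "(w0, V e1 e2) \<in> W"
          proof (rule WO_lim_char[OF w False less.prems VF[OF eX]])
            fix v assume "(v, w0) \<in> W - Id"
            then show "(v, V e1 e2) \<in> W" using A g' by blast
          qed
          then show "case g of (e1, e2) \<Rightarrow> (w0, V e1 e2) \<in> W" using ge by simp
        qed
      next
        assume B: "\<forall>(e1, e2)\<in>gaps lt F. (w0, V e1 e2) \<in> W"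
        show "\<forall>v. (v, w0) \<in> W - Id \<longrightarrow> (\<forall>(e1, e2)\<in>gaps lt F. (v, V e1 e2) \<in> W)"
        proof (intro allI impI ballI)
          fix v g assume v: "(v, w0) \<in> W - Id" and g: "g \<in> gaps lt F"
          obtain e1 e2 where ge: "g = (e1, e2)" by (cases g)
          have "(w0, V e1 e2) \<in> W" using B g ge by blast
          then have "(v, V e1 e2) \<in> W" using WO_trans[OF w] v by blast
          then show "case g of (e1, e2) \<Rightarrow> (v, V e1 e2) \<in> W" using ge by simp
        qed
      qed
      then show ?thesis using Fa by blast
    qed simp
    finally show ?thesis .
  qed
qed


section \<open>Well-order constructions\<close>

lemma WO_I:
  assumes refl: "\<And>x. x \<in> Field r \<Longrightarrow> (x, x) \<in> r"
    and trans: "\<And>x y z. (x, y) \<in> r \<Longrightarrow> (y, z) \<in> r \<Longrightarrow> (x, z) \<in> r"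
    and anti: "\<And>x y. (x, y) \<in> r \<Longrightarrow> (y, x) \<in> r \<Longrightarrow> x = y"
    and total: "\<And>x y. x \<in> Field r \<Longrightarrow> y \<in> Field r \<Longrightarrow> x \<noteq> y \<Longrightarrow> (x, y) \<in> r \<or> (y, x) \<in> r"
    and wf: "wf (r - Id)"
  shows "Well_order r"
proof -
  have "r \<subseteq> Field r \<times> Field r"
  proof
    fix p assume "p \<in> r"
    then show "p \<in> Field r \<times> Field r" by (cases p) (auto intro: FieldI1 FieldI2)
  qed
  moreover have "refl_on (Field r) r" unfolding refl_on_def using refl by blast
  moreover have "Relation.trans r" unfolding trans_def using trans by blast
  moreover have "antisym r" unfolding antisym_def using anti by blast
  moreover have "total_on (Field r) r" unfolding total_on_def using total by blast
  ultimately show ?thesis unfolding order_on_defs using wf by blast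
qed

lemma op_NN[simp]: "(None, None) \<in> one_plus r" unfolding one_plus_def by simp
lemma op_NS[simp]: "(None, Some b) \<in> one_plus r \<longleftrightarrow> b \<in> Field r" unfolding one_plus_def by simp
lemma op_SN[simp]: "(Some a, None) \<notin> one_plus r" unfolding one_plus_def by simp
lemma op_SS[simp]: "(Some a, Some b) \<in> one_plus r \<longleftrightarrow> (a, b) \<in> r" unfolding one_plus_def by simp

lemma op_Field: "Field (one_plus r) = insert None (Some ` Field r)"
proof (intro set_eqI iffI)
  fix x assume "x \<in> Field (one_plus r)"
  then obtain y where "(x, y) \<in> one_plus r \<or> (y, x) \<in> one_plus r" unfolding Field_def by blast
  then show "x \<in> insert None (Some ` Field r)"
    by (cases x; cases y) (auto intro: FieldI1 FieldI2)
next
  fix x assume "x \<in> insert None (Some ` Field r)"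
  then show "x \<in> Field (one_plus r)"
  proof
    assume "x = None" then show ?thesis using op_NN FieldI1 by metis
  next
    assume "x \<in> Some ` Field r"
    then obtain b where "b \<in> Field r" "x = Some b" by blast
    then show ?thesis using op_NS[of b r] FieldI2 by metis
  qed
qed

lemma op_WO:
  assumes w: "Well_order r"
  shows "Well_order (one_plus r)"
proof (rule WO_I)
  fix x assume "x \<in> Field (one_plus r)"
  then show "(x, x) \<in> one_plus r" unfolding op_Field using WO_refl[OF w] by auto
next
  fix x y z assume "(x, y) \<in> one_plus r" "(y, z) \<in> one_plus r"
  then show "(x, z) \<in> one_plus r"
    by (cases x; cases y; cases z) (auto intro: WO_trans[OF w] FieldI2)
next
  fix x y assume "(x, y) \<in> one_plus r" "(y, x) \<in> one_plus r"
  then show "x = y" by (cases x; cases y) (auto intro: WO_antisym[OF w])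
next
  fix x y assume xF: "x \<in> Field (one_plus r)" and yF: "y \<in> Field (one_plus r)" and ne: "x \<noteq> y"
  show "(x, y) \<in> one_plus r \<or> (y, x) \<in> one_plus r"
  proof (cases x)
    case None then show ?thesis using yF unfolding op_Field by auto
  next
    case (Some a)
    note xa = this
    show ?thesis
    proof (cases y)
      case None then show ?thesis using xF xa unfolding op_Field by auto
    next
      case (Some b)
      have "a \<in> Field r" "b \<in> Field r" using xF yF xa Some unfolding op_Field by auto
      then have "(a, b) \<in> r \<or> (b, a) \<in> r" using WO_total[OF w] by blast
      then show ?thesis using xa Some by simp
    qed
  qed
next
  let ?f = "\<lambda>x. case x of None \<Rightarrow> (0::nat, undefined) | Some a \<Rightarrow> (1, a)"
  have "one_plus r - Id \<subseteq> inv_image (less_than <*lex*> (r - Id)) ?f"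
  proof
    fix p assume p: "p \<in> one_plus r - Id"
    obtain x y where xy: "p = (x, y)" by (cases p)
    show "p \<in> inv_image (less_than <*lex*> (r - Id)) ?f"
      using p unfolding xy by (cases x; cases y) auto
  qed
  moreover have "wf (inv_image (less_than <*lex*> (r - Id)) ?f)"
    by (intro wf_inv_image wf_lex_prod wf_less_than WO_wf[OF w])
  ultimately show "wf (one_plus r - Id)" by (rule wf_subset[rotated])
qed

lemma ot_mem[simp]: "((a, n), (b, k)) \<in> omega_times r \<longleftrightarrow>
   a \<in> Field r \<and> b \<in> Field r \<and> (((a, b) \<in> r \<and> a \<noteq> b) \<or> (a = b \<and> n \<le> k))"
  unfolding omega_times_def by simp

lemma ot_Field: "Field (omega_times r) = Field r \<times> UNIV"
proof (intro set_eqI iffI)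
  fix x assume "x \<in> Field (omega_times r)"
  then obtain y where "(x, y) \<in> omega_times r \<or> (y, x) \<in> omega_times r" unfolding Field_def by blast
  then show "x \<in> Field r \<times> UNIV" by (cases x; cases y) auto
next
  fix x :: "'a \<times> nat" assume "x \<in> Field r \<times> UNIV"
  then obtain a n where "x = (a, n)" "a \<in> Field r" by blast
  then have "(x, x) \<in> omega_times r" by simp
  then show "x \<in> Field (omega_times r)" by (rule FieldI1)
qed

lemma ot_WO:
  assumes w: "Well_order r"
  shows "Well_order (omega_times r)"
proof (rule WO_I)
  fix x assume "x \<in> Field (omega_times r)"
  then show "(x, x) \<in> omega_times r" unfolding ot_Field by auto
next
  fix x y z assume xy: "(x, y) \<in> omega_times r" and yz: "(y, z) \<in> omega_times r"
  obtain a n where x: "x = (a, n)" by (cases x)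
  obtain b k where y: "y = (b, k)" by (cases y)
  obtain c l where z: "z = (c, l)" by (cases z)
  have ab: "a \<in> Field r" "b \<in> Field r" "((a, b) \<in> r \<and> a \<noteq> b) \<or> (a = b \<and> n \<le> k)" using xy x y by auto
  have bc: "c \<in> Field r" "((b, c) \<in> r \<and> b \<noteq> c) \<or> (b = c \<and> k \<le> l)" using yz y z by auto
  have "((a, c) \<in> r \<and> a \<noteq> c) \<or> (a = c \<and> n \<le> l)"
  proof (cases "a = b")
    case True
    then show ?thesis using ab bc by auto
  next
    case False
    then have abr: "(a, b) \<in> r" using ab by auto
    show ?thesis
    proof (cases "b = c")
      case True then show ?thesis using abr False by auto
    next
      case bcn: False
      then have bcr: "(b, c) \<in> r" using bc by auto
      have "(a, c) \<in> r" using WO_trans[OF w abr bcr] .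
      moreover have "a \<noteq> c" using WO_antisym[OF w abr] bcr False by blast
      ultimately show ?thesis by blast
    qed
  qed
  then show "(x, z) \<in> omega_times r" using x z ab bc by simp
next
  fix x y assume xy: "(x, y) \<in> omega_times r" and yx: "(y, x) \<in> omega_times r"
  obtain a n where x: "x = (a, n)" by (cases x)
  obtain b k where y: "y = (b, k)" by (cases y)
  show "x = y" using xy yx x y WO_antisym[OF w] by auto
next
  fix x y assume xF: "x \<in> Field (omega_times r)" and yF: "y \<in> Field (omega_times r)" and ne: "x \<noteq> y"
  obtain a n where x: "x = (a, n)" by (cases x)
  obtain b k where y: "y = (b, k)" by (cases y)
  have aF: "a \<in> Field r" and bF: "b \<in> Field r" using xF yF x y unfolding ot_Field by auto
  show "(x, y) \<in> omega_times r \<or> (y, x) \<in> omega_times r"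
  proof (cases "a = b")
    case True then show ?thesis using x y aF bF by auto
  next
    case False then show ?thesis using x y aF bF WO_total[OF w aF bF] by auto
  qed
next
  have "omega_times r - Id \<subseteq> (r - Id) <*lex*> less_than"
  proof
    fix p assume p: "p \<in> omega_times r - Id"
    obtain x y where xy: "p = (x, y)" by (cases p)
    obtain a n where x: "x = (a, n)" by (cases x)
    obtain b k where y: "y = (b, k)" by (cases y)
    show "p \<in> (r - Id) <*lex*> less_than" using p xy x y by auto
  qed
  moreover have "wf ((r - Id) <*lex*> less_than)"
    by (intro wf_lex_prod wf_less_than WO_wf[OF w])
  ultimately show "wf (omega_times r - Id)" by (rule wf_subset[rotated])
qed

lemma opn_LL[simp]: "(Inl a, Inl b) \<in> ord_plus_nat r k \<longleftrightarrow> (a, b) \<in> r" unfolding ord_plus_nat_def by simp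
lemma opn_LR[simp]: "(Inl a, Inr j) \<in> ord_plus_nat r k \<longleftrightarrow> a \<in> Field r \<and> j < k" unfolding ord_plus_nat_def by simp
lemma opn_RL[simp]: "(Inr i, Inl b) \<notin> ord_plus_nat r k" unfolding ord_plus_nat_def by simp
lemma opn_RR[simp]: "(Inr i, Inr j) \<in> ord_plus_nat r k \<longleftrightarrow> i \<le> j \<and> j < k" unfolding ord_plus_nat_def by simp

lemma opn_Field: assumes w: "Well_order r" shows "Field (ord_plus_nat r k) = Inl ` Field r \<union> Inr ` {..<k}"
proof (intro set_eqI iffI)
  fix x assume "x \<in> Field (ord_plus_nat r k)"
  then obtain y where "(x, y) \<in> ord_plus_nat r k \<or> (y, x) \<in> ord_plus_nat r k" unfolding Field_def by blast
  then show "x \<in> Inl ` Field r \<union> Inr ` {..<k}" by (cases x; cases y) (auto intro: FieldI1 FieldI2)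
next
  fix x assume "x \<in> Inl ` Field r \<union> Inr ` {..<k}"
  then show "x \<in> Field (ord_plus_nat r k)"
  proof
    assume "x \<in> Inl ` Field r"
    then obtain a where a: "a \<in> Field r" "x = Inl a" by blast
    then have "(x, x) \<in> ord_plus_nat r k" using WO_refl[OF w] by simp
    then show ?thesis by (rule FieldI1)
  next
    assume "x \<in> Inr ` {..<k}"
    then obtain j where "j < k" "x = Inr j" by blast
    then have "(x, x) \<in> ord_plus_nat r k" by simp
    then show ?thesis by (rule FieldI1)
  qed
qed

lemma opn_WO:
  assumes w: "Well_order r"
  shows "Well_order (ord_plus_nat r k)"
proof (rule WO_I)
  fix x assume "x \<in> Field (ord_plus_nat r k)"
  then show "(x, x) \<in> ord_plus_nat r k" unfolding opn_Field[OF w] using WO_refl[OF w] by auto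
next
  fix x y z assume xy: "(x, y) \<in> ord_plus_nat r k" and yz: "(y, z) \<in> ord_plus_nat r k"
  show "(x, z) \<in> ord_plus_nat r k"
  proof (cases x)
    case (Inl a)
    note xa = this
    show ?thesis
    proof (cases y)
      case (Inl b)
      note yb = this
      have ab: "(a, b) \<in> r" using xy xa yb by simp
      show ?thesis
      proof (cases z)
        case (Inl c)
        then show ?thesis using WO_trans[OF w ab] yz xa yb by simp
      next
        case (Inr l)
        then show ?thesis using yz xa yb FieldI1[OF ab] by simp
      qed
    next
      case (Inr j)
      then show ?thesis using xy yz xa by (cases z) auto
    qed
  next
    case (Inr i)
    then show ?thesis using xy yz by (cases y; cases z) auto
  qed
next
  fix x y assume "(x, y) \<in> ord_plus_nat r k" "(y, x) \<in> ord_plus_nat r k"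
  then show "x = y" by (cases x; cases y) (auto intro: WO_antisym[OF w])
next
  fix x y assume xF: "x \<in> Field (ord_plus_nat r k)" and yF: "y \<in> Field (ord_plus_nat r k)" and ne: "x \<noteq> y"
  show "(x, y) \<in> ord_plus_nat r k \<or> (y, x) \<in> ord_plus_nat r k"
  proof (cases x)
    case (Inl a)
    note xa = this
    show ?thesis
    proof (cases y)
      case (Inl b)
      have "a \<in> Field r" "b \<in> Field r" using xF yF xa Inl unfolding opn_Field[OF w] by auto
      then have "(a, b) \<in> r \<or> (b, a) \<in> r" using WO_total[OF w] by blast
      then show ?thesis using xa Inl by simp
    next
      case (Inr j)
      then show ?thesis using xF yF xa unfolding opn_Field[OF w] by auto
    qed
  next
    case (Inr i)
    then show ?thesis using xF yF unfolding opn_Field[OF w] by (cases y) auto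
  qed
next
  let ?f = "\<lambda>x. (case x of Inl a \<Rightarrow> 0::nat | Inr j \<Rightarrow> Suc j, case x of Inl a \<Rightarrow> a | Inr j \<Rightarrow> undefined)"
  have "ord_plus_nat r k - Id \<subseteq> inv_image (less_than <*lex*> (r - Id)) ?f"
  proof
    fix p assume p: "p \<in> ord_plus_nat r k - Id"
    obtain x y where xy: "p = (x, y)" by (cases p)
    show "p \<in> inv_image (less_than <*lex*> (r - Id)) ?f"
      using p unfolding xy by (cases x; cases y) auto
  qed
  moreover have "wf (inv_image (less_than <*lex*> (r - Id)) ?f)"
    by (intro wf_inv_image wf_lex_prod wf_less_than WO_wf[OF w])
  ultimately show "wf (ord_plus_nat r k - Id)" by (rule wf_subset[rotated])
qed

lemma alpha_countable:
  assumes w: "Well_order r" and c: "countable (Field r)"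
  shows "countable (Field (ord_plus_nat (omega_times (one_plus r)) k))"
proof -
  have w1: "Well_order (omega_times (one_plus r))" using ot_WO[OF op_WO[OF w]] .
  have c1: "countable (Field (one_plus r))" unfolding op_Field using c by simp
  have c2: "countable (Field (omega_times (one_plus r)))" unfolding ot_Field
    using countable_SIGMA[OF c1, of "\<lambda>_. UNIV :: nat set"] by simp
  show ?thesis unfolding opn_Field[OF w1] using c2 by simp
qed


section \<open>Levels and generalized points\<close>

datatype 'b lvl = Fin | Lv 'b | Tp

fun lvl_lt :: "'b rel \<Rightarrow> 'b lvl \<Rightarrow> 'b lvl \<Rightarrow> bool" where
  "lvl_lt r Fin Fin = False"
| "lvl_lt r Fin (Lv x) = (x \<in> Field r)"
| "lvl_lt r Fin Tp = True"
| "lvl_lt r (Lv x) Fin = False"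
| "lvl_lt r (Lv x) (Lv y) = ((x, y) \<in> r \<and> x \<noteq> y)"
| "lvl_lt r (Lv x) Tp = (x \<in> Field r)"
| "lvl_lt r Tp L = False"

definition VL :: "'b rel \<Rightarrow> 'b lvl set" where
  "VL r = {Fin, Tp} \<union> Lv ` Field r"

lemma VL_simps[simp]: "Fin \<in> VL r" "Tp \<in> VL r" "Lv x \<in> VL r \<longleftrightarrow> x \<in> Field r"
  unfolding VL_def by auto

lemma lvl_sl:
  assumes w: "Well_order r"
  shows "strict_linear_on (VL r) (lvl_lt r)"
  unfolding strict_linear_on_def
proof (intro conjI ballI impI)
  fix x assume "x \<in> VL r"
  then show "\<not> lvl_lt r x x" by (cases x) auto
next
  fix x y z assume x: "x \<in> VL r" and y: "y \<in> VL r" and z: "z \<in> VL r" and xy: "lvl_lt r x y" and yz: "lvl_lt r y z"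
  show "lvl_lt r x z"
  proof (cases x)
    case Fin then show ?thesis using yz xy z by (cases y; cases z) auto
  next
    case (Lv a)
    note xa = this
    show ?thesis
    proof (cases y)
      case (Lv b)
      note yb = this
      show ?thesis
      proof (cases z)
        case (Lv c)
        have ab: "(a, b) \<in> r" "a \<noteq> b" and bc: "(b, c) \<in> r" "b \<noteq> c" using xy yz xa yb Lv by auto
        have "(a, c) \<in> r" using WO_trans[OF w ab(1) bc(1)] .
        moreover have "a \<noteq> c" using WO_antisym[OF w ab(1)] bc ab by blast
        ultimately show ?thesis using xa Lv by simp
      next
        case Tp
        have "(a, b) \<in> r" using xy xa yb by simp
        then have "a \<in> Field r" by (rule FieldI1)
        then show ?thesis using xa Tp by simp
      qed (use xy yz xa yb in auto)
    qed (use xy yz xa in auto)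
  next
    case Tp then show ?thesis using xy by simp
  qed
next
  fix x y assume x: "x \<in> VL r" and y: "y \<in> VL r" and ne: "x \<noteq> y"
  show "lvl_lt r x y \<or> lvl_lt r y x"
  proof (cases x)
    case (Lv a)
    note xa = this
    show ?thesis
    proof (cases y)
      case (Lv b)
      have "a \<in> Field r" "b \<in> Field r" "a \<noteq> b" using x y xa Lv ne by auto
      then show ?thesis using WO_total[OF w] xa Lv by auto
    qed (use x y xa in auto)
  qed (use x y ne in \<open>(cases y; auto)+\<close>)
qed

definition agree_above :: "'b rel \<Rightarrow> 'b lvl \<Rightarrow> ('b lvl \<Rightarrow> int) \<Rightarrow> ('b lvl \<Rightarrow> int) \<Rightarrow> bool" where
  "agree_above r L P Q \<longleftrightarrow> (\<forall>L'\<in>VL r. lvl_lt r L L' \<longrightarrow> P L' = Q L')"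

definition TD :: "'b rel \<Rightarrow> ('b lvl \<Rightarrow> int) \<Rightarrow> ('b lvl \<Rightarrow> int) \<Rightarrow> 'b lvl \<Rightarrow> bool" where
  "TD r P Q L \<longleftrightarrow> L \<in> VL r \<and> P L \<noteq> Q L \<and> agree_above r L P Q"

definition glt :: "'b rel \<Rightarrow> ('b lvl \<Rightarrow> int) \<Rightarrow> ('b lvl \<Rightarrow> int) \<Rightarrow> bool" where
  "glt r P Q \<longleftrightarrow> (\<exists>L. TD r P Q L \<and> P L < Q L)"

definition GP :: "'b rel \<Rightarrow> ('b lvl \<Rightarrow> int) \<Rightarrow> bool" where
  "GP r P \<longleftrightarrow> finite {L \<in> VL r. P L \<noteq> 0}"

definition lev :: "'b rel \<Rightarrow> ('b lvl \<Rightarrow> int) \<Rightarrow> ('b lvl \<Rightarrow> int) \<Rightarrow> 'b lvl" where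
  "lev r P Q = (THE L. TD r P Q L)"

lemma TD_sym: "TD r P Q L \<Longrightarrow> TD r Q P L"
  unfolding TD_def agree_above_def by auto

lemma TD_unique:
  assumes w: "Well_order r" and a: "TD r P Q a" and b: "TD r P Q b"
  shows "a = b"
proof (rule ccontr)
  assume ne: "a \<noteq> b"
  have aV: "a \<in> VL r" and bV: "b \<in> VL r" using a b unfolding TD_def by auto
  have "lvl_lt r a b \<or> lvl_lt r b a" using sl_total[OF lvl_sl[OF w] aV bV ne] .
  then show False
  proof
    assume "lvl_lt r a b"
    then have "P b = Q b" using a bV unfolding TD_def agree_above_def by blast
    then show False using b unfolding TD_def by blast
  next
    assume "lvl_lt r b a"
    then have "P a = Q a" using b aV unfolding TD_def agree_above_def by blast
    then show False using a unfolding TD_def by blast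
  qed
qed

lemma lev_eq: "Well_order r \<Longrightarrow> TD r P Q L \<Longrightarrow> lev r P Q = L"
  unfolding lev_def using TD_unique by blast

lemma TD_exists:
  assumes w: "Well_order r" and P: "GP r P" and Q: "GP r Q" and L0: "L0 \<in> VL r" "P L0 \<noteq> Q L0"
  shows "\<exists>L. TD r P Q L"
proof -
  let ?D = "{L \<in> VL r. P L \<noteq> Q L}"
  have "?D \<subseteq> {L \<in> VL r. P L \<noteq> 0} \<union> {L \<in> VL r. Q L \<noteq> 0}" by auto
  then have fin: "finite ?D" using P Q unfolding GP_def by (meson finite_Un finite_subset)
  have ne: "?D \<noteq> {}" using L0 by blast
  obtain a where a: "a \<in> ?D" "\<forall>x\<in>?D. x = a \<or> lvl_lt r x a"
    using finite_max_lt[OF lvl_sl[OF w] fin ne] by blast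
  have "agree_above r a P Q" unfolding agree_above_def
  proof (intro ballI impI)
    fix L' assume L': "L' \<in> VL r" "lvl_lt r a L'"
    show "P L' = Q L'"
    proof (rule ccontr)
      assume "P L' \<noteq> Q L'"
      then have "L' = a \<or> lvl_lt r L' a" using a L' by blast
      then show False using L' sl_asym[OF lvl_sl[OF w]] sl_irrefl[OF lvl_sl[OF w]] a(1) by blast
    qed
  qed
  then show ?thesis using a(1) unfolding TD_def by blast
qed

lemma TD_lt:
  assumes w: "Well_order r" and a: "TD r P Q a" and b: "TD r Q R b" and ab: "lvl_lt r a b"
  shows "TD r P R b \<and> P b = Q b"
proof -
  have aV: "a \<in> VL r" and bV: "b \<in> VL r" using a b unfolding TD_def by auto
  have Pb: "P b = Q b" using a bV ab unfolding TD_def agree_above_def by blast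
  have "agree_above r b P R" unfolding agree_above_def
  proof (intro ballI impI)
    fix L' assume L': "L' \<in> VL r" "lvl_lt r b L'"
    have "lvl_lt r a L'" using sl_trans[OF lvl_sl[OF w] aV bV L'(1) ab L'(2)] .
    then show "P L' = R L'" using a b L' unfolding TD_def agree_above_def by auto
  qed
  then show ?thesis using b Pb bV unfolding TD_def by auto
qed

lemma TD_gt:
  assumes w: "Well_order r" and a: "TD r P Q a" and b: "TD r Q R b" and ba: "lvl_lt r b a"
  shows "TD r P R a \<and> Q a = R a"
  using TD_lt[OF w TD_sym[OF b] TD_sym[OF a] ba] TD_sym by metis

lemma TD_eq:
  assumes a: "TD r P Q a" and b: "TD r Q R a" and ne: "P a \<noteq> R a"
  shows "TD r P R a"
  using a b ne unfolding TD_def agree_above_def by auto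

lemma glt_irrefl: "\<not> glt r P P"
  unfolding glt_def by auto

lemma glt_trans:
  assumes w: "Well_order r" and pq: "glt r P Q" and qr: "glt r Q R"
  shows "glt r P R"
proof -
  obtain a where a: "TD r P Q a" "P a < Q a" using pq unfolding glt_def by blast
  obtain b where b: "TD r Q R b" "Q b < R b" using qr unfolding glt_def by blast
  have aV: "a \<in> VL r" and bV: "b \<in> VL r" using a b unfolding TD_def by auto
  show ?thesis
  proof (cases "a = b")
    case True
    then have "P a < R a" using a b by simp
    then have "TD r P R a" using TD_eq[OF a(1)] b True by fastforce
    then show ?thesis unfolding glt_def using \<open>P a < R a\<close> by blast
  next
    case False
    then have "lvl_lt r a b \<or> lvl_lt r b a" using sl_total[OF lvl_sl[OF w] aV bV] by blast
    then show ?thesis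
    proof
      assume ab: "lvl_lt r a b"
      then show ?thesis using TD_lt[OF w a(1) b(1) ab] b(2) unfolding glt_def by auto
    next
      assume ba: "lvl_lt r b a"
      then show ?thesis using TD_gt[OF w a(1) b(1) ba] a(2) unfolding glt_def by auto
    qed
  qed
qed

lemma glt_asym: "Well_order r \<Longrightarrow> glt r P Q \<Longrightarrow> \<not> glt r Q P"
  using glt_trans glt_irrefl by blast

lemma glt_total:
  assumes w: "Well_order r" and P: "GP r P" and Q: "GP r Q" and L0: "L0 \<in> VL r" "P L0 \<noteq> Q L0"
  shows "glt r P Q \<or> glt r Q P"
proof -
  obtain L where L: "TD r P Q L" using TD_exists[OF w P Q L0] by blast
  then have "P L < Q L \<or> Q L < P L" unfolding TD_def by auto
  then show ?thesis using L TD_sym unfolding glt_def by blast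
qed

lemma glt_TD: "Well_order r \<Longrightarrow> glt r P Q \<Longrightarrow> TD r P Q (lev r P Q) \<and> P (lev r P Q) < Q (lev r P Q)"
  unfolding glt_def using lev_eq by metis

definition shift :: "'b rel \<Rightarrow> ('b lvl \<Rightarrow> int) \<Rightarrow> 'b lvl \<Rightarrow> int \<Rightarrow> ('b lvl \<Rightarrow> int)" where
  "shift r P L t = (\<lambda>K. if lvl_lt r L K then P K else if K = L then P L + t else 0)"

lemma shift_above: "lvl_lt r L K \<Longrightarrow> shift r P L t K = P K"
  unfolding shift_def by simp

lemma shift_at: "Well_order r \<Longrightarrow> L \<in> VL r \<Longrightarrow> shift r P L t L = P L + t"
  unfolding shift_def using sl_irrefl[OF lvl_sl] by metis

lemma shift_below: "\<not> lvl_lt r L K \<Longrightarrow> K \<noteq> L \<Longrightarrow> shift r P L t K = 0"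
  unfolding shift_def by simp

lemma TD_shift:
  assumes w: "Well_order r" and L: "L \<in> VL r" and t: "t \<noteq> 0"
  shows "TD r P (shift r P L t) L"
  unfolding TD_def agree_above_def using shift_at[OF w L, of P t] t L shift_above[of r L _ P t] by auto

lemma TD_shift_low:
  assumes w: "Well_order r" and pq: "TD r P Q L" and L': "L' \<in> VL r" "lvl_lt r L' L"
  shows "TD r (shift r P L' t) Q L \<and> shift r P L' t L = P L"
proof -
  have LV: "L \<in> VL r" using pq unfolding TD_def by auto
  have s: "shift r P L' t K = P K" if "K \<in> VL r" "lvl_lt r L K \<or> K = L" for K
  proof -
    have "lvl_lt r L' K" using that sl_trans[OF lvl_sl[OF w] L'(1) LV that(1) L'(2)] L'(2) by blast
    then show ?thesis by (rule shift_above)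
  qed
  show ?thesis using pq s LV unfolding TD_def agree_above_def by auto
qed

lemma TD_shift_same:
  assumes w: "Well_order r" and pq: "TD r P Q L" and ne: "P L + t \<noteq> Q L"
  shows "TD r (shift r P L t) Q L"
proof -
  have LV: "L \<in> VL r" using pq unfolding TD_def by auto
  show ?thesis using pq ne shift_at[OF w LV] shift_above[of r L] LV unfolding TD_def agree_above_def by auto
qed

section \<open>Discrete logarithm\<close>

definition lg :: "nat \<Rightarrow> nat" where
  "lg j = nat \<lfloor>log 2 (real j)\<rfloor>"

lemma lg_le_iff:
  assumes j: "j \<ge> 1"
  shows "n \<le> lg j \<longleftrightarrow> 2 ^ n \<le> j"
proof -
  have jp: "(0::real) < real j" using j by simp
  have "0 \<le> log 2 (real j)" using j by simp
  then have "0 \<le> \<lfloor>log 2 (real j)\<rfloor>" by simp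
  then have "n \<le> lg j \<longleftrightarrow> int n \<le> \<lfloor>log 2 (real j)\<rfloor>" unfolding lg_def by (simp add: le_nat_iff)
  also have "\<dots> \<longleftrightarrow> real n \<le> log 2 (real j)" by linarith
  also have "\<dots> \<longleftrightarrow> 2 powr (real n) \<le> real j" using le_log_iff[OF _ jp, of 2 "real n"] by simp
  also have "\<dots> \<longleftrightarrow> (2::real) ^ n \<le> real j" by (simp add: powr_realpow)
  also have "\<dots> \<longleftrightarrow> 2 ^ n \<le> j" by (metis of_nat_le_iff of_nat_numeral of_nat_power)
  finally show ?thesis .
qed

lemma lg_one: "lg 1 = 0"
  unfolding lg_def by simp

lemma lg_mono: "1 \<le> i \<Longrightarrow> i \<le> j \<Longrightarrow> lg i \<le> lg j"
  using lg_le_iff by (metis le_trans order_refl)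

lemma lg_sum:
  assumes "j1 \<ge> 1" "j2 \<ge> 1"
  shows "min (lg j1) (lg j2) < lg (j1 + j2)"
proof -
  let ?n = "min (lg j1) (lg j2)"
  have "2 ^ ?n \<le> j1" using lg_le_iff[OF assms(1), of ?n] by simp
  moreover have "2 ^ ?n \<le> j2" using lg_le_iff[OF assms(2), of ?n] by simp
  ultimately have "2 ^ Suc ?n \<le> j1 + j2" by simp
  then have "Suc ?n \<le> lg (j1 + j2)" using lg_le_iff[of "j1 + j2" "Suc ?n"] assms by simp
  then show ?thesis by simp
qed

lemma lg_pow: "lg (2 ^ n) = n"
proof -
  have "k \<le> lg (2 ^ n) \<longleftrightarrow> k \<le> n" for k
    using lg_le_iff[of "2 ^ n" k] by (simp add: Suc_leI)
  then show ?thesis by (meson le_antisym order_refl)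
qed


definition gval :: "'b rel \<Rightarrow> ('b lvl \<Rightarrow> int) \<Rightarrow> ('b lvl \<Rightarrow> int) \<Rightarrow> 'b lvl \<times> nat" where
  "gval r P Q = (lev r P Q, lg (nat (Q (lev r P Q) - P (lev r P Q))))"

definition vle :: "'b rel \<Rightarrow> 'b lvl \<times> nat \<Rightarrow> 'b lvl \<times> nat \<Rightarrow> bool" where
  "vle r a b \<longleftrightarrow> lvl_lt r (fst a) (fst b) \<or> (fst a = fst b \<and> snd a \<le> snd b)"

definition vlt :: "'b rel \<Rightarrow> 'b lvl \<times> nat \<Rightarrow> 'b lvl \<times> nat \<Rightarrow> bool" where
  "vlt r a b \<longleftrightarrow> lvl_lt r (fst a) (fst b) \<or> (fst a = fst b \<and> snd a < snd b)"

lemma gval_TD: "Well_order r \<Longrightarrow> TD r P Q L \<Longrightarrow> gval r P Q = (L, lg (nat (Q L - P L)))"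
  unfolding gval_def using lev_eq by metis

lemma upper_bound:
  assumes w: "Well_order r" and pc: "glt r P C" and cq: "glt r C Q" and uV: "fst u \<in> VL r"
    and u1: "vle r u (gval r P C)" and u2: "vle r u (gval r C Q)"
  shows "vlt r u (gval r P Q)"
proof -
  define a where "a = lev r P C"
  define b where "b = lev r C Q"
  have a: "TD r P C a" "P a < C a" using glt_TD[OF w pc] unfolding a_def by auto
  have b: "TD r C Q b" "C b < Q b" using glt_TD[OF w cq] unfolding b_def by auto
  have aV: "a \<in> VL r" and bV: "b \<in> VL r" using a b unfolding TD_def by auto
  have ga: "gval r P C = (a, lg (nat (C a - P a)))" using gval_TD[OF w a(1)] .
  have gb: "gval r C Q = (b, lg (nat (Q b - C b)))" using gval_TD[OF w b(1)] .
  have sl: "strict_linear_on (VL r) (lvl_lt r)" using lvl_sl[OF w] .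
  show ?thesis
  proof (cases "a = b")
    case True
    have ne: "P a \<noteq> Q a" using a b True by simp
    have td: "TD r P Q a" using TD_eq[OF a(1)] b(1) True ne by simp
    have g: "gval r P Q = (a, lg (nat (Q a - P a)))" using gval_TD[OF w td] .
    show ?thesis
    proof (cases "fst u = a")
      case False
      then have "lvl_lt r (fst u) a" using u1 ga unfolding vle_def by auto
      then show ?thesis using g unfolding vlt_def by simp
    next
      case ua: True
      have "snd u \<le> lg (nat (C a - P a))" using u1 ga ua sl_irrefl[OF sl aV] unfolding vle_def by auto
      moreover have "snd u \<le> lg (nat (Q a - C a))" using u2 gb ua True sl_irrefl[OF sl aV] unfolding vle_def by auto
      moreover have "nat (Q a - P a) = nat (C a - P a) + nat (Q a - C a)" using a b True by simp
      moreover have "min (lg (nat (C a - P a))) (lg (nat (Q a - C a))) < lg (nat (C a - P a) + nat (Q a - C a))"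
        by (rule lg_sum) (use a b True in auto)
      ultimately have "snd u < lg (nat (C a - P a) + nat (Q a - C a))" by linarith
      then have "snd u < lg (nat (Q a - P a))" using \<open>nat (Q a - P a) = nat (C a - P a) + nat (Q a - C a)\<close> by simp
      then show ?thesis using g ua unfolding vlt_def by simp
    qed
  next
    case False
    then have "lvl_lt r a b \<or> lvl_lt r b a" using sl_total[OF sl aV bV] by blast
    then show ?thesis
    proof
      assume ab: "lvl_lt r a b"
      have td: "TD r P Q b" using TD_lt[OF w a(1) b(1) ab] by blast
      have "lvl_lt r (fst u) b"
      proof -
        have "fst u = a \<or> lvl_lt r (fst u) a" using u1 ga unfolding vle_def by auto
        then show ?thesis using ab sl_trans[OF sl uV aV bV] by blast
      qed
      then show ?thesis using gval_TD[OF w td] unfolding vlt_def by simp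
    next
      assume ba: "lvl_lt r b a"
      have td: "TD r P Q a" using TD_gt[OF w a(1) b(1) ba] by blast
      have "lvl_lt r (fst u) a"
      proof -
        have "fst u = b \<or> lvl_lt r (fst u) b" using u2 gb unfolding vle_def by auto
        then show ?thesis using ba sl_trans[OF sl uV bV aV] by blast
      qed
      then show ?thesis using gval_TD[OF w td] unfolding vlt_def by simp
    qed
  qed
qed

lemma lowA:
  assumes w: "Well_order r" and pq: "glt r P Q" and L: "L = lev r P Q"
    and n: "n' < lg (nat (Q L - P L))"
  defines "C \<equiv> shift r P L (2 ^ n')"
  shows "glt r P C \<and> glt r C Q \<and> gval r P C = (L, n') \<and> vle r (L, n') (gval r C Q)"
proof -
  have td: "TD r P Q L" "P L < Q L" using glt_TD[OF w pq] L by auto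
  have LV: "L \<in> VL r" using td unfolding TD_def by auto
  define j where "j = nat (Q L - P L)"
  have j1: "j \<ge> 1" using td unfolding j_def by simp
  have "Suc n' \<le> lg j" using n unfolding j_def by simp
  then have jb: "2 ^ Suc n' \<le> j" using lg_le_iff[OF j1] by blast
  have t0: "(2::int) ^ n' \<noteq> 0" by simp
  have tdc: "TD r P C L" unfolding C_def using TD_shift[OF w LV t0] .
  have CL: "C L = P L + 2 ^ n'" unfolding C_def using shift_at[OF w LV] .
  have jint: "int j = Q L - P L" using td unfolding j_def by simp
  have big: "Q L - C L \<ge> 2 ^ n'"
  proof -
    have "int (2 ^ Suc n') \<le> int j" using jb by linarith
    then have "2 * 2 ^ n' \<le> Q L - P L" using jint by simp
    then show ?thesis using CL by simp
  qed
  have pos: "(0::int) < 2 ^ n'" by simp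
  have ne: "P L + 2 ^ n' \<noteq> Q L" using big CL pos by linarith
  have tdq: "TD r C Q L" unfolding C_def by (rule TD_shift_same[OF w td(1) ne])
  have g1: "gval r P C = (L, lg (nat (C L - P L)))" using gval_TD[OF w tdc] .
  have np: "nat ((2::int) ^ n') = 2 ^ n'" by (simp add: nat_power_eq)
  have g1': "gval r P C = (L, n')" using g1 CL np lg_pow[of n'] by simp
  have g2: "gval r C Q = (L, lg (nat (Q L - C L)))" using gval_TD[OF w tdq] .
  have "n' \<le> lg (nat (Q L - C L))"
  proof -
    have one: "(1::int) \<le> 2 ^ n'" by simp
    have "int (2 ^ n') \<le> Q L - C L" using big by simp
    then have "2 ^ n' \<le> nat (Q L - C L)" using one big by linarith
    moreover have "nat (Q L - C L) \<ge> 1" using big one by linarith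
    ultimately show ?thesis using lg_le_iff by blast
  qed
  then have "vle r (L, n') (gval r C Q)" using g2 unfolding vle_def by simp
  moreover have "glt r P C" unfolding glt_def using tdc CL by auto
  moreover have "C L < Q L" using big pos by linarith
  then have "glt r C Q" unfolding glt_def using tdq by blast
  ultimately show ?thesis using g1' by blast
qed

lemma lowB:
  assumes w: "Well_order r" and pq: "glt r P Q" and L: "L = lev r P Q"
    and L'V: "L' \<in> VL r" and L'L: "lvl_lt r L' L" and t: "t \<ge> 1"
  defines "C \<equiv> shift r P L' (int t)"
  shows "glt r P C \<and> glt r C Q \<and> gval r P C = (L', lg t) \<and> gval r C Q = gval r P Q"
proof -
  have td: "TD r P Q L" "P L < Q L" using glt_TD[OF w pq] L by auto
  have t0: "int t \<noteq> 0" using t by simp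
  have tdc: "TD r P C L'" unfolding C_def using TD_shift[OF w L'V t0] .
  have CL': "C L' = P L' + int t" unfolding C_def using shift_at[OF w L'V] .
  have s: "TD r C Q L \<and> C L = P L" unfolding C_def using TD_shift_low[OF w td(1) L'V L'L] .
  have "gval r P C = (L', lg (nat (C L' - P L')))" using gval_TD[OF w tdc] .
  then have g1: "gval r P C = (L', lg t)" using CL' by simp
  have "gval r C Q = (L, lg (nat (Q L - C L)))" using gval_TD[OF w] s by blast
  then have g2: "gval r C Q = gval r P Q" using gval_TD[OF w td(1)] s by simp
  have "glt r P C" unfolding glt_def using tdc CL' t by auto
  moreover have "glt r C Q" unfolding glt_def using s td by auto
  ultimately show ?thesis using g1 g2 by blast
qed

lemma lowC:
  assumes w: "Well_order r" and pq: "glt r P Q" and L: "L = lev r P Q"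
    and LF: "L \<noteq> Fin" and t: "t \<ge> 1"
  defines "C \<equiv> Q(Fin := Q Fin - int t)"
  shows "glt r P C \<and> glt r C Q \<and> gval r C Q = (Fin, lg t) \<and> gval r P C = gval r P Q"
proof -
  have td: "TD r P Q L" "P L < Q L" using glt_TD[OF w pq] L by auto
  have LV: "L \<in> VL r" using td unfolding TD_def by auto
  have tdq: "TD r C Q Fin"
    unfolding TD_def agree_above_def C_def using t by auto
  have CF: "C Fin = Q Fin - int t" unfolding C_def by simp
  have aboveL: "C L' = Q L'" if "lvl_lt r L L'" for L'
  proof -
    have "L' \<noteq> Fin" using that by (cases L; cases L') auto
    then show ?thesis unfolding C_def by simp
  qed
  have tdc: "TD r P C L"
    using td LF aboveL unfolding TD_def agree_above_def C_def by auto
  have g1: "gval r C Q = (Fin, lg t)" using gval_TD[OF w tdq] CF by simp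
  have CL: "C L = Q L" using LF unfolding C_def by simp
  have g2: "gval r P C = gval r P Q" using gval_TD[OF w tdc] gval_TD[OF w td(1)] CL by simp
  have "glt r P C" unfolding glt_def using tdc CL td by auto
  moreover have "glt r C Q" unfolding glt_def using tdq CF t by auto
  ultimately show ?thesis using g1 g2 by blast
qed


lemma oe_mem: "(f, g) \<in> omega_exp r \<longleftrightarrow> f \<in> fin_supp r \<and> g \<in> fin_supp r \<and>
   (f = g \<or> (\<exists>x\<in>Field r. f x < g x \<and> (\<forall>y\<in>Field r. (x, y) \<in> r \<and> y \<noteq> x \<longrightarrow> f y = g y)))"
  unfolding omega_exp_def by simp

lemma oe_Field: "Field (omega_exp r) = fin_supp r"
proof (intro set_eqI iffI)
  fix f assume "f \<in> Field (omega_exp r)"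
  then obtain g where "(f, g) \<in> omega_exp r \<or> (g, f) \<in> omega_exp r" unfolding Field_def by blast
  then show "f \<in> fin_supp r" unfolding oe_mem by blast
next
  fix f assume "f \<in> fin_supp r"
  then have "(f, f) \<in> omega_exp r" unfolding oe_mem by blast
  then show "f \<in> Field (omega_exp r)" by (rule FieldI1)
qed

lemma otn_mem: "((i, a), (j, b)) \<in> ord_times_nat r m \<longleftrightarrow>
   i < m \<and> j < m \<and> a \<in> Field r \<and> b \<in> Field r \<and> (i < j \<or> (i = j \<and> (a, b) \<in> r))"
  unfolding ord_times_nat_def by simp

lemma R_Field: "Field (ord_times_nat (omega_exp r) m) = {p. fst p < m \<and> snd p \<in> fin_supp r}"
proof (intro set_eqI iffI)
  fix p assume "p \<in> Field (ord_times_nat (omega_exp r) m)"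
  then obtain q where "(p, q) \<in> ord_times_nat (omega_exp r) m \<or> (q, p) \<in> ord_times_nat (omega_exp r) m"
    unfolding Field_def by blast
  then show "p \<in> {p. fst p < m \<and> snd p \<in> fin_supp r}"
    by (cases p; cases q) (auto simp: otn_mem oe_Field)
next
  fix p assume p: "p \<in> {p. fst p < m \<and> snd p \<in> fin_supp r}"
  obtain i f where pi: "p = (i, f)" by (cases p)
  have "(f, f) \<in> omega_exp r" using p pi unfolding oe_mem by simp
  then have "(p, p) \<in> ord_times_nat (omega_exp r) m" using p pi by (simp add: otn_mem oe_Field)
  then show "p \<in> Field (ord_times_nat (omega_exp r) m)" by (rule FieldI1)
qed

lemma Xc_mem: "((i, f), z) \<in> Z_carrier (ord_times_nat (omega_exp r) m) \<longleftrightarrow> i < m \<and> f \<in> fin_supp r"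
  unfolding Z_carrier_def R_Field by simp

locale XS =
  fixes \<beta> :: "'b rel" and m :: nat and x0 :: 'b
  assumes w: "Well_order \<beta>" and m1: "m \<ge> 1" and x0F: "x0 \<in> Field \<beta>"
    and x0min: "\<And>y. y \<in> Field \<beta> \<Longrightarrow> (x0, y) \<in> \<beta>"
begin

abbreviation "R \<equiv> ord_times_nat (omega_exp \<beta>) m"
abbreviation "Xc \<equiv> Z_carrier R"
abbreviation "lt \<equiv> Z_less R"

definition emb :: "(nat \<times> ('b \<Rightarrow> nat)) \<times> int \<Rightarrow> 'b lvl \<Rightarrow> int" where
  "emb p = (\<lambda>L. case L of Fin \<Rightarrow> snd p | Lv x \<Rightarrow> int (snd (fst p) x) | Tp \<Rightarrow> int (fst (fst p)))"

definition bt :: "'b lvl \<Rightarrow> int" where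
  "bt = (\<lambda>L. case L of Lv x \<Rightarrow> if x = x0 then -1 else 0 | _ \<Rightarrow> 0)"

definition tp :: "'b lvl \<Rightarrow> int" where
  "tp = (\<lambda>L. case L of Tp \<Rightarrow> int m | _ \<Rightarrow> 0)"

fun embe :: "((nat \<times> ('b \<Rightarrow> nat)) \<times> int) ext \<Rightarrow> 'b lvl \<Rightarrow> int" where
  "embe Bot = bt" | "embe Top = tp" | "embe (Pt p) = emb p"

lemma emb_simps[simp]: "emb ((i, f), z) Fin = z" "emb ((i, f), z) (Lv x) = int (f x)" "emb ((i, f), z) Tp = int i"
  unfolding emb_def by auto

lemma bt_simps[simp]: "bt Fin = 0" "bt Tp = 0" "bt (Lv x) = (if x = x0 then -1 else 0)"
  unfolding bt_def by auto

lemma tp_simps[simp]: "tp Fin = 0" "tp Tp = int m" "tp (Lv x) = 0"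
  unfolding tp_def by auto

lemma XcE: assumes "p \<in> Xc" obtains i f z where "p = ((i, f), z)" "i < m" "f \<in> fin_supp \<beta>"
  using assms by (cases p) (auto simp: Xc_mem)

lemma fin_suppD: "f \<in> fin_supp \<beta> \<Longrightarrow> finite {x. f x \<noteq> 0}" "f \<in> fin_supp \<beta> \<Longrightarrow> x \<notin> Field \<beta> \<Longrightarrow> f x = 0"
  unfolding fin_supp_def by auto

lemma GP_from_Lv:
  assumes "finite {x. P (Lv x) \<noteq> 0}"
  shows "GP \<beta> P"
proof -
  have "{L \<in> VL \<beta>. P L \<noteq> 0} \<subseteq> {Fin, Tp} \<union> Lv ` {x. P (Lv x) \<noteq> 0}"
  proof
    fix L assume "L \<in> {L \<in> VL \<beta>. P L \<noteq> 0}"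
    then show "L \<in> {Fin, Tp} \<union> Lv ` {x. P (Lv x) \<noteq> 0}" by (cases L) auto
  qed
  moreover have "finite ({Fin, Tp} \<union> Lv ` {x. P (Lv x) \<noteq> 0})" using assms by simp
  ultimately show ?thesis unfolding GP_def by (rule finite_subset)
qed

lemma GP_emb: "p \<in> Xc \<Longrightarrow> GP \<beta> (emb p)"
  by (erule XcE) (auto intro!: GP_from_Lv dest: fin_suppD)

lemma GP_bt: "GP \<beta> bt"
proof (rule GP_from_Lv)
  have "{x. bt (Lv x) \<noteq> 0} \<subseteq> {x0}" by auto
  then show "finite {x. bt (Lv x) \<noteq> 0}" by (rule finite_subset) simp
qed

lemma GP_tp: "GP \<beta> tp"
  by (rule GP_from_Lv) simp

lemma GP_embe: "e \<in> exts Xc \<Longrightarrow> GP \<beta> (embe e)"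
  using GP_emb GP_bt GP_tp by (cases e) auto

lemma bridge:
  assumes p: "p \<in> Xc" and q: "q \<in> Xc"
  shows "lt p q \<longleftrightarrow> glt \<beta> (emb p) (emb q)"
proof -
  obtain i f z where pe: "p = ((i, f), z)" "i < m" "f \<in> fin_supp \<beta>" using p by (rule XcE)
  obtain i' f' z' where qe: "q = ((i', f'), z')" "i' < m" "f' \<in> fin_supp \<beta>" using q by (rule XcE)
  have fF: "f \<in> Field (omega_exp \<beta>)" "f' \<in> Field (omega_exp \<beta>)" using pe qe oe_Field by auto
  have lt_eq: "lt p q \<longleftrightarrow> i < i' \<or> (i = i' \<and> f \<noteq> f' \<and> (f, f') \<in> omega_exp \<beta>) \<or> (i = i' \<and> f = f' \<and> z < z')"
    unfolding Z_less_def pe qe using pe qe fF by (auto simp: otn_mem)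
  show ?thesis
  proof
    assume "lt p q"
    then consider (a) "i < i'" | (b) "i = i'" "f \<noteq> f'" "(f, f') \<in> omega_exp \<beta>" | (c) "i = i'" "f = f'" "z < z'"
      unfolding lt_eq by blast
    then show "glt \<beta> (emb p) (emb q)"
    proof cases
      case a
      have "TD \<beta> (emb p) (emb q) Tp" unfolding TD_def agree_above_def pe qe using a by simp
      then show ?thesis unfolding glt_def pe qe using a by (intro exI[of _ Tp]) simp
    next
      case b
      then obtain x where x: "x \<in> Field \<beta>" "f x < f' x" "\<forall>y\<in>Field \<beta>. (x, y) \<in> \<beta> \<and> y \<noteq> x \<longrightarrow> f y = f' y"
        unfolding oe_mem by blast
      have "agree_above \<beta> (Lv x) (emb p) (emb q)"
        unfolding agree_above_def pe qe
      proof (intro ballI impI)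
        fix L assume "L \<in> VL \<beta>" "lvl_lt \<beta> (Lv x) L"
        then show "emb ((i, f), z) L = emb ((i', f'), z') L" using x b by (cases L) auto
      qed
      then have "TD \<beta> (emb p) (emb q) (Lv x)" unfolding TD_def pe qe using x by simp
      then show ?thesis unfolding glt_def pe qe using x by (intro exI[of _ "Lv x"]) simp
    next
      case c
      have "agree_above \<beta> Fin (emb p) (emb q)"
        unfolding agree_above_def pe qe
      proof (intro ballI impI)
        fix L' assume "L' \<in> VL \<beta>" "lvl_lt \<beta> Fin L'"
        then show "emb ((i, f), z) L' = emb ((i', f'), z') L'" using c by (cases L') auto
      qed
      then have "TD \<beta> (emb p) (emb q) Fin" unfolding TD_def pe qe using c by simp
      then show ?thesis unfolding glt_def pe qe using c by (intro exI[of _ Fin]) simp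
    qed
  next
    assume "glt \<beta> (emb p) (emb q)"
    then obtain L where L: "TD \<beta> (emb p) (emb q) L" "emb p L < emb q L" unfolding glt_def by blast
    have ab: "\<And>L'. L' \<in> VL \<beta> \<Longrightarrow> lvl_lt \<beta> L L' \<Longrightarrow> emb p L' = emb q L'"
      using L unfolding TD_def agree_above_def by blast
    show "lt p q"
    proof (cases L)
      case Tp
      then show ?thesis using L pe qe lt_eq by simp
    next
      case (Lv x)
      have xF: "x \<in> Field \<beta>" using L Lv unfolding TD_def by simp
      have ii: "i = i'" using ab[of Tp] Lv xF pe qe by simp
      have fx: "f x < f' x" using L Lv pe qe by simp
      have above: "\<forall>y\<in>Field \<beta>. (x, y) \<in> \<beta> \<and> y \<noteq> x \<longrightarrow> f y = f' y"
      proof (intro ballI impI)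
        fix y assume y: "y \<in> Field \<beta>" "(x, y) \<in> \<beta> \<and> y \<noteq> x"
        have "lvl_lt \<beta> (Lv x) (Lv y)" using y by auto
        then have "emb p (Lv y) = emb q (Lv y)" using ab[of "Lv y"] Lv y by simp
        then show "f y = f' y" using pe qe by simp
      qed
      have "(f, f') \<in> omega_exp \<beta>" unfolding oe_mem using pe qe xF fx above by blast
      moreover have "f \<noteq> f'" using fx by auto
      ultimately show ?thesis using lt_eq ii by blast
    next
      case Fin
      have ii: "i = i'" using ab[of Tp] Fin pe qe by simp
      have "f y = f' y" for y
      proof (cases "y \<in> Field \<beta>")
        case True
        then show ?thesis using ab[of "Lv y"] Fin pe qe by simp
      next
        case False
        then show ?thesis using fin_suppD(2) pe qe by metis
      qed
      then have ff: "f = f'" by blast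
      have "z < z'" using L Fin pe qe by simp
      then show ?thesis using lt_eq ii ff by blast
    qed
  qed
qed

lemma glt_emb_tp: "p \<in> Xc \<Longrightarrow> glt \<beta> (emb p) tp"
proof -
  assume "p \<in> Xc"
  then obtain i f z where pe: "p = ((i, f), z)" "i < m" by (rule XcE)
  have "TD \<beta> (emb p) tp Tp" unfolding TD_def agree_above_def using pe by simp
  moreover have "emb p Tp < tp Tp" using pe by simp
  ultimately show ?thesis unfolding glt_def by blast
qed

lemma glt_bt_tp: "glt \<beta> bt tp"
proof -
  have "TD \<beta> bt tp Tp" unfolding TD_def agree_above_def using m1 by simp
  moreover have "bt Tp < tp Tp" using m1 by simp
  ultimately show ?thesis unfolding glt_def by blast
qed

lemma glt_bt_emb: "p \<in> Xc \<Longrightarrow> glt \<beta> bt (emb p)"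
proof -
  assume pX: "p \<in> Xc"
  then obtain i f z where pe: "p = ((i, f), z)" "i < m" "f \<in> fin_supp \<beta>" by (rule XcE)
  have ne: "bt (Lv x0) \<noteq> emb p (Lv x0)" using pe by simp
  have x0V: "Lv x0 \<in> VL \<beta>" using x0F by simp
  have "glt \<beta> bt (emb p) \<or> glt \<beta> (emb p) bt" using glt_total[OF w GP_bt GP_emb[OF pX] x0V ne] .
  moreover have "\<not> glt \<beta> (emb p) bt"
  proof
    assume "glt \<beta> (emb p) bt"
    then obtain L where L: "TD \<beta> (emb p) bt L" "emb p L < bt L" unfolding glt_def by blast
    show False
    proof (cases L)
      case Fin
      then have "emb p (Lv x0) = bt (Lv x0)" using L x0F unfolding TD_def agree_above_def by simp
      then show False using ne by simp
    next
      case (Lv x) then show False using L pe by (simp split: if_splits)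
    next
      case Tp then show False using L pe by simp
    qed
  qed
  ultimately show ?thesis by blast
qed

lemma elt_iff:
  assumes e1: "e1 \<in> exts Xc" and e2: "e2 \<in> exts Xc"
  shows "elt lt e1 e2 \<longleftrightarrow> glt \<beta> (embe e1) (embe e2)"
proof (cases e1)
  case Bot
  then show ?thesis
  proof (cases e2)
    case Bot then show ?thesis using \<open>e1 = Bot\<close> glt_irrefl by simp
  next
    case (Pt q) then show ?thesis using \<open>e1 = Bot\<close> e2 glt_bt_emb by simp
  next
    case Top then show ?thesis using \<open>e1 = Bot\<close> glt_bt_tp by simp
  qed
next
  case (Pt p)
  have pX: "p \<in> Xc" using e1 Pt by simp
  show ?thesis
  proof (cases e2)
    case Bot then show ?thesis using Pt glt_asym[OF w glt_bt_emb[OF pX]] by simp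
  next
    case (Pt q) then show ?thesis using \<open>e1 = Pt p\<close> e2 pX bridge by simp
  next
    case Top then show ?thesis using Pt glt_emb_tp[OF pX] by simp
  qed
next
  case Top
  then show ?thesis
  proof (cases e2)
    case Bot then show ?thesis using Top glt_asym[OF w glt_bt_tp] by simp
  next
    case (Pt q) then show ?thesis using Top e2 glt_asym[OF w glt_emb_tp] by simp
  next
    case Top then show ?thesis using \<open>e1 = Top\<close> glt_irrefl by simp
  qed
qed

lemma emb_diff:
  assumes p: "p \<in> Xc" and q: "q \<in> Xc" and ne: "p \<noteq> q"
  shows "\<exists>L\<in>VL \<beta>. emb p L \<noteq> emb q L"
proof -
  obtain i f z where pe: "p = ((i, f), z)" "i < m" "f \<in> fin_supp \<beta>" using p by (rule XcE)
  obtain i' f' z' where qe: "q = ((i', f'), z')" "i' < m" "f' \<in> fin_supp \<beta>" using q by (rule XcE)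
  show ?thesis
  proof (cases "i = i' \<and> z = z'")
    case True
    then have "f \<noteq> f'" using ne pe qe by auto
    then obtain x where x: "f x \<noteq> f' x" by blast
    then have "x \<in> Field \<beta>" using fin_suppD(2)[OF pe(3)] fin_suppD(2)[OF qe(3)] by metis
    then show ?thesis using x pe qe by (intro bexI[of _ "Lv x"]) auto
  next
    case False
    show ?thesis
    proof (cases "i = i'")
      case True
      then have "z \<noteq> z'" using False by simp
      then show ?thesis using pe qe by (intro bexI[of _ Fin]) auto
    next
      case False
      then show ?thesis using pe qe by (intro bexI[of _ Tp]) auto
    qed
  qed
qed

lemma sl_X: "strict_linear_on Xc lt"
  unfolding strict_linear_on_def
proof (intro conjI ballI impI)
  fix x assume x: "x \<in> Xc"
  show "\<not> lt x x" using bridge[OF x x] glt_irrefl by simp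
next
  fix x y z assume xyz: "x \<in> Xc" "y \<in> Xc" "z \<in> Xc" and xy: "lt x y" and yz: "lt y z"
  have "glt \<beta> (emb x) (emb y)" using bridge[OF xyz(1,2)] xy by simp
  moreover have "glt \<beta> (emb y) (emb z)" using bridge[OF xyz(2,3)] yz by simp
  ultimately have "glt \<beta> (emb x) (emb z)" by (rule glt_trans[OF w])
  then show "lt x z" using bridge[OF xyz(1,3)] by simp
next
  fix x y assume xy: "x \<in> Xc" "y \<in> Xc" "x \<noteq> y"
  then obtain L where "L \<in> VL \<beta>" "emb x L \<noteq> emb y L" using emb_diff by blast
  then have "glt \<beta> (emb x) (emb y) \<or> glt \<beta> (emb y) (emb x)"
    using glt_total[OF w GP_emb[OF xy(1)] GP_emb[OF xy(2)]] by blast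
  then show "lt x y \<or> lt y x" using bridge[OF xy(1,2)] bridge[OF xy(2,1)] by blast
qed

end


fun toW :: "'b lvl \<Rightarrow> nat \<Rightarrow> ('b option \<times> nat) + nat" where
  "toW Fin n = Inl (None, n)"
| "toW (Lv x) n = Inl (Some x, n)"
| "toW Tp n = Inr n"

lemma toW_inj: "toW L n = toW L' n' \<longleftrightarrow> L = L' \<and> n = n'"
  by (cases L; cases L') auto

context XS
begin

abbreviation "KK \<equiv> lg m + 2"
abbreviation "Wr \<equiv> ord_plus_nat (omega_times (one_plus \<beta>)) KK"

definition vok :: "'b lvl \<Rightarrow> nat \<Rightarrow> bool" where
  "vok L n \<longleftrightarrow> L \<in> VL \<beta> \<and> (L = Tp \<longrightarrow> n < KK)"

lemma Wr_WO: "Well_order Wr"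
  using opn_WO[OF ot_WO[OF op_WO[OF w]]] .

lemma Wr_Field: "Field Wr = Inl ` ((insert None (Some ` Field \<beta>)) \<times> UNIV) \<union> Inr ` {..<KK}"
  unfolding opn_Field[OF ot_WO[OF op_WO[OF w]]] ot_Field op_Field ..

lemma W_Field_E:
  assumes "u \<in> Field Wr"
  obtains L n where "vok L n" "u = toW L n"
proof -
  from assms consider (a) "\<exists>n. u = Inl (None, n)" | (b) "\<exists>x n. x \<in> Field \<beta> \<and> u = Inl (Some x, n)" | (c) "\<exists>j<KK. u = Inr j"
    unfolding Wr_Field by blast
  then show ?thesis
  proof cases
    case a
    then obtain n where "u = Inl (None, n)" by blast
    then show ?thesis using that[of Fin n] unfolding vok_def by simp
  next
    case b
    then obtain x n where "x \<in> Field \<beta>" "u = Inl (Some x, n)" by blast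
    then show ?thesis using that[of "Lv x" n] unfolding vok_def by simp
  next
    case c
    then obtain j where "j < KK" "u = Inr j" by blast
    then show ?thesis using that[of Tp j] unfolding vok_def by simp
  qed
qed

lemma toW_Field: "vok L n \<Longrightarrow> toW L n \<in> Field Wr"
  unfolding Wr_Field vok_def by (cases L) auto

lemma W_cmp:
  assumes a: "vok L n" and b: "vok L' n'"
  shows "(toW L n, toW L' n') \<in> Wr \<longleftrightarrow> vle \<beta> (L, n) (L', n')"
  using a b unfolding vok_def vle_def by (cases L; cases L') (auto simp: op_Field ot_Field)

lemma vle_vlt:
  assumes "fst a \<in> VL \<beta>"
  shows "vle \<beta> a b \<and> a \<noteq> b \<longleftrightarrow> vlt \<beta> a b"
proof -
  have "\<not> lvl_lt \<beta> (fst a) (fst a)" using sl_irrefl[OF lvl_sl[OF w] assms] .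
  then show ?thesis unfolding vle_def vlt_def by (cases a; cases b) auto
qed

definition V :: "((nat \<times> ('b \<Rightarrow> nat)) \<times> int) ext \<Rightarrow> ((nat \<times> ('b \<Rightarrow> nat)) \<times> int) ext \<Rightarrow> ('b option \<times> nat) + nat" where
  "V e1 e2 = toW (fst (gval \<beta> (embe e1) (embe e2))) (snd (gval \<beta> (embe e1) (embe e2)))"

lemma embe_Tp: "e \<in> exts Xc \<Longrightarrow> 0 \<le> embe e Tp \<and> embe e Tp \<le> int m \<and> (e \<noteq> Top \<longrightarrow> embe e Tp < int m)"
proof -
  assume e: "e \<in> exts Xc"
  show ?thesis
  proof (cases e)
    case (Pt p)
    then have "p \<in> Xc" using e by simp
    then obtain i f z where "p = ((i, f), z)" "i < m" by (rule XcE)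
    then show ?thesis using Pt by simp
  qed (use m1 in auto)
qed

lemma embe_Lv: "e \<in> exts Xc \<Longrightarrow> e \<noteq> Bot \<Longrightarrow> 0 \<le> embe e (Lv x)"
  by (cases e) (auto simp: emb_def)

lemma embe_out: "e \<in> exts Xc \<Longrightarrow> x \<notin> Field \<beta> \<Longrightarrow> embe e (Lv x) = 0"
proof -
  assume e: "e \<in> exts Xc" and x: "x \<notin> Field \<beta>"
  show ?thesis
  proof (cases e)
    case (Pt p)
    then have "p \<in> Xc" using e by simp
    then obtain i f z where pe: "p = ((i, f), z)" "f \<in> fin_supp \<beta>" by (rule XcE)
    then show ?thesis using Pt fin_suppD(2)[OF pe(2) x] by simp
  qed (use x x0F in auto)
qed

lemma embe_fin: "e \<in> exts Xc \<Longrightarrow> finite {x. embe e (Lv x) \<noteq> 0}"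
proof -
  assume e: "e \<in> exts Xc"
  show ?thesis
  proof (cases e)
    case (Pt p)
    then have "p \<in> Xc" using e by simp
    then obtain i f z where pe: "p = ((i, f), z)" "f \<in> fin_supp \<beta>" by (rule XcE)
    then show ?thesis using Pt fin_suppD(1)[OF pe(2)] by simp
  next
    case Bot
    have "{x. bt (Lv x) \<noteq> 0} \<subseteq> {x0}" by auto
    then show ?thesis using Bot finite_subset by fastforce
  qed simp
qed

lemma vok_gval:
  assumes e1: "e1 \<in> exts Xc" and e2: "e2 \<in> exts Xc" and e12: "elt lt e1 e2"
  shows "vok (fst (gval \<beta> (embe e1) (embe e2))) (snd (gval \<beta> (embe e1) (embe e2)))"
proof -
  let ?P = "embe e1" and ?Q = "embe e2"
  have g: "glt \<beta> ?P ?Q" using elt_iff[OF e1 e2] e12 by simp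
  define L where "L = lev \<beta> ?P ?Q"
  have td: "TD \<beta> ?P ?Q L" "?P L < ?Q L" using glt_TD[OF w g] unfolding L_def by auto
  have gv: "gval \<beta> ?P ?Q = (L, lg (nat (?Q L - ?P L)))" using gval_TD[OF w td(1)] .
  have LV: "L \<in> VL \<beta>" using td unfolding TD_def by simp
  have "lg (nat (?Q L - ?P L)) < KK" if LT: "L = Tp"
  proof -
    have "?Q Tp - ?P Tp \<le> int m" using embe_Tp[OF e1] embe_Tp[OF e2] by linarith
    then have "nat (?Q L - ?P L) \<le> m" using LT by simp
    moreover have "1 \<le> nat (?Q L - ?P L)" using td by simp
    ultimately have "lg (nat (?Q L - ?P L)) \<le> lg m" by (rule lg_mono[rotated])
    then show ?thesis by simp
  qed
  then show ?thesis unfolding vok_def gv using LV by simp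
qed

definition VP :: "('b lvl \<Rightarrow> int) \<Rightarrow> bool" where
  "VP C \<longleftrightarrow> 0 \<le> C Tp \<and> C Tp < int m \<and> (\<forall>x. 0 \<le> C (Lv x)) \<and> (\<forall>x. x \<notin> Field \<beta> \<longrightarrow> C (Lv x) = 0)
     \<and> finite {x. C (Lv x) \<noteq> 0}"

lemma VP_emb:
  assumes "VP C"
  shows "\<exists>c\<in>Xc. emb c = C"
proof -
  define c where "c = ((nat (C Tp), \<lambda>x. nat (C (Lv x))), C Fin)"
  have fs: "(\<lambda>x. nat (C (Lv x))) \<in> fin_supp \<beta>"
  proof -
    have "{x. 0 < C (Lv x)} \<subseteq> {x. C (Lv x) \<noteq> 0}" by auto
    then have "finite {x. 0 < C (Lv x)}" using assms unfolding VP_def by (blast intro: finite_subset)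
    then show ?thesis using assms unfolding VP_def fin_supp_def by simp
  qed
  have cX: "c \<in> Xc" unfolding c_def Xc_mem using assms fs unfolding VP_def by auto
  have "emb c L = C L" for L
    using assms unfolding c_def VP_def by (cases L) auto
  then show ?thesis using cX by blast
qed

lemma x0_not_above: "lvl_lt \<beta> L (Lv x0) \<Longrightarrow> L = Fin"
proof (cases L)
  case (Lv y)
  assume h: "lvl_lt \<beta> L (Lv x0)"
  then have "(y, x0) \<in> \<beta>" "y \<noteq> x0" using Lv by auto
  moreover have "(x0, y) \<in> \<beta>" using x0min FieldI1 calculation(1) by metis
  ultimately show ?thesis using WO_antisym[OF w] by blast
qed auto

lemma shift_VP:
  assumes e: "e \<in> exts Xc" "e \<noteq> Top" and L: "L \<in> VL \<beta>" and t: "t \<ge> 1"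
    and bf: "e = Bot \<Longrightarrow> L \<noteq> Fin" and tp: "L = Tp \<Longrightarrow> embe e Tp + t < int m"
  shows "VP (shift \<beta> (embe e) L t)"
proof -
  let ?P = "embe e" and ?C = "shift \<beta> (embe e) L t"
  have T: "embe e Tp \<ge> 0" "embe e Tp < int m" using embe_Tp[OF e(1)] e(2) by auto
  have CT: "0 \<le> ?C Tp \<and> ?C Tp < int m"
  proof (cases "L = Tp")
    case True
    then show ?thesis using shift_at[OF w L] tp T t by simp
  next
    case False
    then have "lvl_lt \<beta> L Tp" using L by (cases L) auto
    then show ?thesis using shift_above[OF \<open>lvl_lt \<beta> L Tp\<close>] T by simp
  qed
  have CL: "0 \<le> ?C (Lv x)" for x
  proof (cases "lvl_lt \<beta> L (Lv x)")
    case True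
    have "0 \<le> ?P (Lv x)"
    proof (cases "e = Bot")
      case True
      then have "x \<noteq> x0" using bf x0_not_above \<open>lvl_lt \<beta> L (Lv x)\<close> by blast
      then show ?thesis using True by simp
    next
      case False then show ?thesis using embe_Lv[OF e(1)] by simp
    qed
    then show ?thesis using shift_above[OF True] by simp
  next
    case False
    show ?thesis
    proof (cases "Lv x = L")
      case True
      have "-1 \<le> ?P (Lv x)" using embe_Lv[OF e(1)] by (cases e) auto
      then show ?thesis using shift_at[OF w L] True t by simp
    next
      case ne: False
      then show ?thesis using shift_below[OF False] by simp
    qed
  qed
  have CO: "?C (Lv x) = 0" if x: "x \<notin> Field \<beta>" for x
  proof -
    have "\<not> lvl_lt \<beta> L (Lv x)" using x by (cases L) (auto intro: FieldI2)
    moreover have "Lv x \<noteq> L" using x L by auto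
    ultimately show ?thesis by (rule shift_below)
  qed
  have CF: "finite {x. ?C (Lv x) \<noteq> 0}"
  proof -
    have "{x. ?C (Lv x) \<noteq> 0} \<subseteq> {x. ?P (Lv x) \<noteq> 0} \<union> {x. L = Lv x}"
    proof
      fix x assume "x \<in> {x. ?C (Lv x) \<noteq> 0}"
      then have nz: "?C (Lv x) \<noteq> 0" by simp
      show "x \<in> {x. ?P (Lv x) \<noteq> 0} \<union> {x. L = Lv x}"
      proof (cases "lvl_lt \<beta> L (Lv x)")
        case True then show ?thesis using nz shift_above[OF True] by simp
      next
        case False then show ?thesis using nz shift_below[OF False] by fastforce
      qed
    qed
    moreover have "finite {x. L = Lv x}" by (cases L) auto
    ultimately show ?thesis using embe_fin[OF e(1)] by (meson finite_UnI finite_subset)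
  qed
  show ?thesis unfolding VP_def using CT CL CO CF by blast
qed

lemma lev_bt:
  assumes e2: "e2 \<in> exts Xc" "e2 \<noteq> Bot" and g: "glt \<beta> bt (embe e2)"
  shows "lev \<beta> bt (embe e2) \<noteq> Fin"
proof
  assume F: "lev \<beta> bt (embe e2) = Fin"
  have "TD \<beta> bt (embe e2) Fin" using glt_TD[OF w g] F by simp
  then have ab: "agree_above \<beta> Fin bt (embe e2)" unfolding TD_def by simp
  have "lvl_lt \<beta> Fin (Lv x0)" "Lv x0 \<in> VL \<beta>" using x0F by auto
  then have "bt (Lv x0) = embe e2 (Lv x0)" using ab unfolding agree_above_def by blast
  then show False using embe_Lv[OF e2, of x0] by simp
qed

end


context XS
begin

lemma VP_fin_change:
  assumes e: "e \<in> exts Xc" "e \<noteq> Bot" "e \<noteq> Top"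
  shows "VP ((embe e)(Fin := z))"
  unfolding VP_def using embe_Tp[OF e(1)] embe_Lv[OF e(1,2)] embe_out[OF e(1)] embe_fin[OF e(1)] e(3)
  by auto

lemma pick:
  assumes e1: "e1 \<in> exts Xc" and e2: "e2 \<in> exts Xc" and C: "VP C"
    and pc: "glt \<beta> (embe e1) C" and cq: "glt \<beta> C (embe e2)" and u: "vok L' n'"
    and v1: "vle \<beta> (L', n') (gval \<beta> (embe e1) C)" and v2: "vle \<beta> (L', n') (gval \<beta> C (embe e2))"
  shows "\<exists>c\<in>Xc. elt lt e1 (Pt c) \<and> elt lt (Pt c) e2 \<and> (toW L' n', V e1 (Pt c)) \<in> Wr \<and> (toW L' n', V (Pt c) e2) \<in> Wr"
proof -
  obtain c where cX: "c \<in> Xc" and cC: "emb c = C" using VP_emb[OF C] by blast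
  have ce: "Pt c \<in> exts Xc" using cX by simp
  have eC: "embe (Pt c) = C" using cC by simp
  have l1: "elt lt e1 (Pt c)" using elt_iff[OF e1 ce] pc eC by simp
  have l2: "elt lt (Pt c) e2" using elt_iff[OF ce e2] cq eC by simp
  have o1: "vok (fst (gval \<beta> (embe e1) C)) (snd (gval \<beta> (embe e1) C))" using vok_gval[OF e1 ce l1] eC by simp
  have o2: "vok (fst (gval \<beta> C (embe e2))) (snd (gval \<beta> C (embe e2)))" using vok_gval[OF ce e2 l2] eC by simp
  have w1: "(toW L' n', V e1 (Pt c)) \<in> Wr"
    unfolding V_def eC using W_cmp[OF u o1] v1 by simp
  have w2: "(toW L' n', V (Pt c) e2) \<in> Wr"
    unfolding V_def eC using W_cmp[OF u o2] v2 by simp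
  show ?thesis using cX l1 l2 w1 w2 by blast
qed

lemma S_prop:
  assumes e1: "e1 \<in> exts Xc" and e2: "e2 \<in> exts Xc" and e12: "elt lt e1 e2" and uF: "u \<in> Field Wr"
  shows "((u, V e1 e2) \<in> Wr \<and> u \<noteq> V e1 e2) \<longleftrightarrow>
       (\<exists>c\<in>Xc. elt lt e1 (Pt c) \<and> elt lt (Pt c) e2 \<and> (u, V e1 (Pt c)) \<in> Wr \<and> (u, V (Pt c) e2) \<in> Wr)"
proof -
  obtain L' n' where u: "vok L' n'" and ue: "u = toW L' n'" using W_Field_E[OF uF] by blast
  have L'V: "L' \<in> VL \<beta>" using u unfolding vok_def by simp
  define P where "P = embe e1"
  define Q where "Q = embe e2"
  have g: "glt \<beta> P Q" using elt_iff[OF e1 e2] e12 unfolding P_def Q_def by simp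
  define gq where "gq = gval \<beta> P Q"
  have vg: "vok (fst gq) (snd gq)" using vok_gval[OF e1 e2 e12] unfolding gq_def P_def Q_def .
  have Ve: "V e1 e2 = toW (fst gq) (snd gq)" unfolding V_def gq_def P_def Q_def ..
  have key: "((u, V e1 e2) \<in> Wr \<and> u \<noteq> V e1 e2) \<longleftrightarrow> vlt \<beta> (L', n') gq"
  proof -
    have "(u, V e1 e2) \<in> Wr \<longleftrightarrow> vle \<beta> (L', n') (fst gq, snd gq)" unfolding ue Ve using W_cmp[OF u vg] .
    moreover have "u \<noteq> V e1 e2 \<longleftrightarrow> (L', n') \<noteq> gq" unfolding ue Ve toW_inj by (cases gq) auto
    ultimately show ?thesis using vle_vlt[of "(L', n')" gq] L'V by simp
  qed
  have e1T: "e1 \<noteq> Top" using e12 by (cases e1) auto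
  have e2B: "e2 \<noteq> Bot" using e12 by (cases e2) auto
  define L where "L = lev \<beta> P Q"
  have td: "TD \<beta> P Q L" "P L < Q L" using glt_TD[OF w g] unfolding L_def by auto
  have LV: "L \<in> VL \<beta>" using td unfolding TD_def by simp
  have gqe: "gq = (L, lg (nat (Q L - P L)))" unfolding gq_def L_def gval_def ..
  show ?thesis
  proof
    assume lhs: "(u, V e1 e2) \<in> Wr \<and> u \<noteq> V e1 e2"
    then have vl: "vlt \<beta> (L', n') gq" using key by blast
    have vle_gq: "vle \<beta> (L', n') gq" using vl unfolding vlt_def vle_def by auto
    have refl_vle: "vle \<beta> (L', n') (L', n')" unfolding vle_def by simp
    have "\<exists>c\<in>Xc. elt lt e1 (Pt c) \<and> elt lt (Pt c) e2 \<and> (toW L' n', V e1 (Pt c)) \<in> Wr \<and> (toW L' n', V (Pt c) e2) \<in> Wr"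
    proof (cases "L' = L")
      case True
      then have nn: "n' < lg (nat (Q L - P L))" using vl gqe sl_irrefl[OF lvl_sl[OF w] LV] unfolding vlt_def by auto
      define C where "C = shift \<beta> P L (2 ^ n')"
      have A: "glt \<beta> P C \<and> glt \<beta> C Q \<and> gval \<beta> P C = (L, n') \<and> vle \<beta> (L, n') (gval \<beta> C Q)"
        unfolding C_def using lowA[OF w g L_def nn] .
      have bf: "L \<noteq> Fin" if "e1 = Bot"
        using lev_bt[OF e2 e2B] g that unfolding L_def P_def Q_def by simp
      have tpc: "P Tp + 2 ^ n' < int m" if LT: "L = Tp"
      proof -
        define j where "j = nat (Q L - P L)"
        have j1: "j \<ge> 1" using td unfolding j_def by simp
        have "Suc n' \<le> lg j" using nn unfolding j_def by simp
        then have "2 ^ Suc n' \<le> j" using lg_le_iff[OF j1] by blast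
        then have "int (2 ^ Suc n') \<le> Q L - P L" using td unfolding j_def by linarith
        then have "P Tp + 2 * 2 ^ n' \<le> Q Tp" using LT by simp
        moreover have "Q Tp \<le> int m" using embe_Tp[OF e2] unfolding Q_def by simp
        moreover have "(0::int) < 2 ^ n'" by simp
        ultimately show ?thesis by linarith
      qed
      have VC: "VP C" unfolding C_def P_def
        by (rule shift_VP[OF e1 e1T LV]) (use bf tpc P_def in auto)
      show ?thesis using pick[OF e1 e2 VC _ _ u] A True refl_vle unfolding P_def Q_def by auto
    next
      case False
      then have L'L: "lvl_lt \<beta> L' L" using vl gqe unfolding vlt_def by auto
      have L'T: "L' \<noteq> Tp" using L'L by (cases L') auto
      show ?thesis
      proof (cases "e1 = Bot \<and> L' = Fin")
        case False
        define C where "C = shift \<beta> P L' (int (2 ^ n'))"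
        have t1: "(2::nat) ^ n' \<ge> 1" by simp
        have B: "glt \<beta> P C \<and> glt \<beta> C Q \<and> gval \<beta> P C = (L', lg (2 ^ n')) \<and> gval \<beta> C Q = gval \<beta> P Q"
          unfolding C_def using lowB[OF w g L_def L'V L'L t1] .
        have VC: "VP C" unfolding C_def P_def
          by (rule shift_VP[OF e1 e1T L'V]) (use False L'T in auto)
        show ?thesis using pick[OF e1 e2 VC _ _ u] B lg_pow[of n'] refl_vle vle_gq unfolding P_def Q_def gq_def by auto
      next
        case True
        then have e1b: "e1 = Bot" and L'F: "L' = Fin" by auto
        show ?thesis
        proof (cases "e2 = Top")
          case False
          have LF: "L \<noteq> Fin" using L'L L'F by auto
          define C where "C = Q(Fin := Q Fin - int (2 ^ n'))"
          have t1: "(2::nat) ^ n' \<ge> 1" by simp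
          have B: "glt \<beta> P C \<and> glt \<beta> C Q \<and> gval \<beta> C Q = (Fin, lg (2 ^ n')) \<and> gval \<beta> P C = gval \<beta> P Q"
            unfolding C_def using lowC[OF w g L_def LF t1] .
          have VC: "VP C" unfolding C_def Q_def using VP_fin_change[OF e2 e2B False] .
          show ?thesis using pick[OF e1 e2 VC _ _ u] B lg_pow[of n'] refl_vle vle_gq L'F unfolding P_def Q_def gq_def by auto
        next
          case True
          have tdt: "TD \<beta> bt tp Tp" unfolding TD_def agree_above_def using m1 by simp
          have LT: "L = Tp" unfolding L_def P_def Q_def using lev_eq[OF w tdt] e1b True by simp
          have x0V: "Lv x0 \<in> VL \<beta>" using x0F by simp
          have xL: "lvl_lt \<beta> (Lv x0) L" using LT x0F by simp
          define C where "C = shift \<beta> P (Lv x0) (int 1)"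
          have t1: "(1::nat) \<ge> 1" by simp
          have B: "glt \<beta> P C \<and> glt \<beta> C Q \<and> gval \<beta> P C = (Lv x0, lg 1) \<and> gval \<beta> C Q = gval \<beta> P Q"
            unfolding C_def using lowB[OF w g L_def x0V xL t1] .
          have VC: "VP C" unfolding C_def P_def
            by (rule shift_VP[OF e1 e1T x0V]) auto
          have v1: "vle \<beta> (L', n') (Lv x0, lg 1)" using L'F x0F unfolding vle_def by simp
          show ?thesis using pick[OF e1 e2 VC _ _ u] B v1 vle_gq unfolding P_def Q_def gq_def by auto
        qed
      qed
    qed
    then show "\<exists>c\<in>Xc. elt lt e1 (Pt c) \<and> elt lt (Pt c) e2 \<and> (u, V e1 (Pt c)) \<in> Wr \<and> (u, V (Pt c) e2) \<in> Wr"
      using ue by simp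
  next
    assume "\<exists>c\<in>Xc. elt lt e1 (Pt c) \<and> elt lt (Pt c) e2 \<and> (u, V e1 (Pt c)) \<in> Wr \<and> (u, V (Pt c) e2) \<in> Wr"
    then obtain c where cX: "c \<in> Xc" and c1: "elt lt e1 (Pt c)" and c2: "elt lt (Pt c) e2"
      and w1: "(u, V e1 (Pt c)) \<in> Wr" and w2: "(u, V (Pt c) e2) \<in> Wr" by blast
    have ce: "Pt c \<in> exts Xc" using cX by simp
    have pc: "glt \<beta> P (emb c)" using elt_iff[OF e1 ce] c1 unfolding P_def by simp
    have cq: "glt \<beta> (emb c) Q" using elt_iff[OF ce e2] c2 unfolding Q_def by simp
    have o1: "vok (fst (gval \<beta> P (emb c))) (snd (gval \<beta> P (emb c)))" using vok_gval[OF e1 ce c1] unfolding P_def by simp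
    have o2: "vok (fst (gval \<beta> (emb c) Q)) (snd (gval \<beta> (emb c) Q))" using vok_gval[OF ce e2 c2] unfolding Q_def by simp
    have v1: "vle \<beta> (L', n') (gval \<beta> P (emb c))"
      using w1 W_cmp[OF u o1] unfolding ue V_def P_def by simp
    have v2: "vle \<beta> (L', n') (gval \<beta> (emb c) Q)"
      using w2 W_cmp[OF u o2] unfolding ue V_def Q_def by simp
    have "vlt \<beta> (L', n') gq" unfolding gq_def using upper_bound[OF w pc cq _ v1 v2] L'V by simp
    then show "(u, V e1 e2) \<in> Wr \<and> u \<noteq> V e1 e2" using key by blast
  qed
qed

lemma gaps_empty: "gaps lt {} = {(Bot, Top)}"
proof (intro set_eqI iffI)
  fix p :: "((nat \<times> ('b \<Rightarrow> nat)) \<times> int) ext \<times> ((nat \<times> ('b \<Rightarrow> nat)) \<times> int) ext"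
  assume p: "p \<in> gaps lt {}"
  obtain e1 e2 where pe: "p = (e1, e2)" by (cases p)
  have "e1 \<in> {Bot, Top}" "e2 \<in> {Bot, Top}" "elt lt e1 e2" using gapsD(1,2,3)[of e1 e2 lt "{}"] p pe
    unfolding exts_def by auto
  then show "p \<in> {(Bot, Top)}" using pe by auto
next
  fix p :: "((nat \<times> ('b \<Rightarrow> nat)) \<times> int) ext \<times> ((nat \<times> ('b \<Rightarrow> nat)) \<times> int) ext"
  assume "p \<in> {(Bot, Top)}"
  then have "p = (Bot, Top)" by simp
  moreover have "(Bot, Top) \<in> gaps lt {}" by (rule gapsI) auto
  ultimately show "p \<in> gaps lt {}" by simp
qed

lemma V_Bot_Top: "V Bot Top = Inr (lg m)"
proof -
  have tdt: "TD \<beta> bt tp Tp" unfolding TD_def agree_above_def using m1 by simp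
  have "gval \<beta> bt tp = (Tp, lg (nat (tp Tp - bt Tp)))" using gval_TD[OF w tdt] .
  then show ?thesis unfolding V_def by simp
qed

lemma infX: "infinite (UNIV :: ((nat \<times> ('b \<Rightarrow> nat)) \<times> int) set)"
proof
  assume fin: "finite (UNIV :: ((nat \<times> ('b \<Rightarrow> nat)) \<times> int) set)"
  let ?f = "\<lambda>z::int. ((0::nat, \<lambda>_::'b. 0::nat), z)"
  have "inj ?f" unfolding inj_def by simp
  moreover have "finite (range ?f)" using fin by (rule finite_subset[rotated]) simp
  ultimately have "finite (UNIV :: int set)" using finite_imageD by blast
  then show False by simp
qed

lemma main_levels:
  assumes w0: "w0 \<in> Field Wr"
  shows "{} \<in> rank_levels Xc lt Wr w0 \<longleftrightarrow> (w0, Inr (lg m)) \<in> Wr"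
proof -
  have VF: "V e1 e2 \<in> Field Wr" if "e1 \<in> exts Xc" "e2 \<in> exts Xc" "elt lt e1 e2" for e1 e2
    unfolding V_def using toW_Field[OF vok_gval[OF that]] .
  have "{} \<in> rank_levels Xc lt Wr w0 \<longleftrightarrow> ({} \<in> age Xc \<and> (\<forall>(e1, e2)\<in>gaps lt {}. (w0, V e1 e2) \<in> Wr))"
    using gap_char[OF sl_X infX Wr_WO VF S_prop w0] by blast
  moreover have "{} \<in> age Xc" unfolding age_def by simp
  ultimately show ?thesis unfolding gaps_empty by (simp add: V_Bot_Top)
qed

end


context XS
begin

abbreviation "Bo \<equiv> omega_times (one_plus \<beta>)"
abbreviation "Al \<equiv> ord_plus_nat Bo (lg m)"

lemma Bo_WO: "Well_order Bo" using ot_WO[OF op_WO[OF w]] .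
lemma Al_WO: "Well_order Al" using opn_WO[OF Bo_WO] .

lemma Al_Wr: "x \<in> Field Al \<Longrightarrow> y \<in> Field Al \<Longrightarrow> (x, y) \<in> Al \<longleftrightarrow> (x, y) \<in> Wr"
  unfolding opn_Field[OF Bo_WO] by (cases x; cases y) auto

lemma Al_top: "x \<in> Field Al \<Longrightarrow> (x, Inr (lg m)) \<in> Wr \<and> x \<noteq> Inr (lg m)"
  unfolding opn_Field[OF Bo_WO] by (cases x) auto

lemma below_top: "(y, Inr (lg m)) \<in> Wr \<Longrightarrow> y \<in> Field Al \<or> y = Inr (lg m)"
  unfolding opn_Field[OF Bo_WO] by (cases y) (auto intro: FieldI1)

lemma top_not_below: "x \<in> Field Al \<Longrightarrow> (Inr (lg m), x) \<notin> Wr"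
  unfolding opn_Field[OF Bo_WO] by (cases x) auto

lemma Wr_transfer:
  fixes s :: "'o rel" and \<phi> :: "('b option \<times> nat) + nat \<Rightarrow> 'o" and tt :: 'o
  assumes ws: "Well_order s"
    and ord: "\<And>x y. x \<in> Field Al \<Longrightarrow> y \<in> Field Al \<Longrightarrow> (x, y) \<in> Al \<longleftrightarrow> (\<phi> x, \<phi> y) \<in> s"
    and inj: "inj_on \<phi> (Field Al)"
    and tnot: "tt \<notin> \<phi> ` Field Al"
    and below: "\<And>x. x \<in> Field Al \<Longrightarrow> (\<phi> x, tt) \<in> s"
    and trefl: "(tt, tt) \<in> s"
    and down: "\<And>y. (y, tt) \<in> s \<Longrightarrow> y \<in> \<phi> ` Field Al \<or> y = tt"
  shows "rank_levels Xc lt Wr (Inr (lg m)) = rank_levels Xc lt s tt"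
proof -
  define A where "A = {x. (x, Inr (lg m)) \<in> Wr}"
  define f where "f x = (if x = Inr (lg m) then tt else \<phi> x)" for x
  have Aeq: "x \<in> A \<longleftrightarrow> x \<in> Field Al \<or> x = Inr (lg m)" for x
    unfolding A_def using Al_top below_top by auto
  have fA: "f ` A = \<phi> ` Field Al \<union> {tt}"
  proof (intro set_eqI iffI)
    fix y assume "y \<in> f ` A"
    then obtain x where "x \<in> A" "y = f x" by blast
    then show "y \<in> \<phi> ` Field Al \<union> {tt}" using Aeq Al_top unfolding f_def by auto
  next
    fix y assume y: "y \<in> \<phi> ` Field Al \<union> {tt}"
    show "y \<in> f ` A"
    proof (cases "y = tt")
      case True
      then have "y = f (Inr (lg m))" unfolding f_def by simp
      moreover have "Inr (lg m) \<in> A" using Aeq by simp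
      ultimately show ?thesis by blast
    next
      case False
      then obtain x where x: "x \<in> Field Al" "y = \<phi> x" using y by blast
      then have "y = f x" unfolding f_def using Al_top by auto
      moreover have "x \<in> A" using Aeq x by simp
      ultimately show ?thesis by blast
    qed
  qed
  have fx_top: "(f x, tt) \<in> s" if "x \<in> A" for x
    using that Aeq below trefl Al_top unfolding f_def by auto
  have "rank_levels Xc lt Wr (Inr (lg m)) = rank_levels Xc lt s (f (Inr (lg m)))"
  proof (rule rl_transfer[OF Wr_WO ws])
    fix x y assume "x \<in> A" "(y, x) \<in> Wr"
    then show "y \<in> A" unfolding A_def using WO_trans[OF Wr_WO] by blast
  next
    show "inj_on f A"
      unfolding inj_on_def
    proof (intro ballI impI)
      fix x y assume x: "x \<in> A" and y: "y \<in> A" and e: "f x = f y"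
      show "x = y"
      proof (cases "x = Inr (lg m)")
        case True
        then have "f y = tt" using e unfolding f_def by simp
        then show ?thesis using True tnot Aeq y Al_top unfolding f_def by (metis image_eqI)
      next
        case xn: False
        show ?thesis
        proof (cases "y = Inr (lg m)")
          case True
          then have "f x = tt" using e unfolding f_def by simp
          then show ?thesis using xn tnot Aeq x unfolding f_def by (metis image_eqI)
        next
          case False
          then show ?thesis using xn e inj x y Aeq unfolding f_def inj_on_def by auto
        qed
      qed
    qed
  next
    fix x y assume x: "x \<in> A" and y: "(y, f x) \<in> s"
    have "(y, tt) \<in> s" using WO_trans[OF ws y fx_top[OF x]] .
    then show "y \<in> f ` A" unfolding fA using down by blast
  next
    fix x y assume x: "x \<in> A" and y: "y \<in> A"
    show "(x, y) \<in> Wr \<longleftrightarrow> (f x, f y) \<in> s"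
    proof (cases "x = Inr (lg m)")
      case xt: True
      show ?thesis
      proof (cases "y = Inr (lg m)")
        case True
        then show ?thesis using xt trefl WO_refl[OF Wr_WO] unfolding f_def by (simp add: opn_Field[OF Bo_WO])
      next
        case False
        then have yF: "y \<in> Field Al" using Aeq y by simp
        have "(Inr (lg m), y) \<notin> Wr" using top_not_below[OF yF] .
        moreover have "(tt, \<phi> y) \<notin> s"
        proof
          assume "(tt, \<phi> y) \<in> s"
          then have "tt = \<phi> y" using WO_antisym[OF ws _ below[OF yF]] by blast
          then show False using tnot yF by blast
        qed
        ultimately show ?thesis using xt False unfolding f_def by simp
      qed
    next
      case xn: False
      then have xF: "x \<in> Field Al" using Aeq x by simp
      show ?thesis
      proof (cases "y = Inr (lg m)")
        case True
        then show ?thesis using xn Al_top[OF xF] below[OF xF] unfolding f_def by simp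
      next
        case False
        then have yF: "y \<in> Field Al" using Aeq y by simp
        then show ?thesis using xn False ord[OF xF yF] Al_Wr[OF xF yF] unfolding f_def by simp
      qed
    qed
  next
    show "Inr (lg m) \<in> A" using Aeq by simp
  qed
  then show ?thesis unfolding f_def by simp
qed

lemma empty_top: "{} \<in> rank_levels Xc lt Wr (Inr (lg m))"
proof -
  have "Inr (lg m) \<in> Field Wr" unfolding Wr_Field by simp
  then show ?thesis using main_levels by simp
qed

lemma empty_not_top1: "{} \<notin> rank_levels Xc lt Wr (Inr (Suc (lg m)))"
proof -
  have "Inr (Suc (lg m)) \<in> Field Wr" unfolding Wr_Field by simp
  then show ?thesis using main_levels by simp
qed

lemma pred_top: "is_pred Wr (Inr (lg m)) (Inr (Suc (lg m)))"
proof (rule is_predI)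
  show "(Inr (lg m), Inr (Suc (lg m))) \<in> Wr" by simp
  show "Inr (lg m) \<noteq> (Inr (Suc (lg m)) :: ('b option \<times> nat) + nat)" by simp
  fix c assume "(Inr (lg m), c) \<in> Wr" "(c, Inr (Suc (lg m))) \<in> Wr"
  then show "c = Inr (lg m) \<or> c = Inr (Suc (lg m))" by (cases c) auto
qed

lemma upper_part:
  fixes g :: "nat rel"
  assumes wg: "Well_order g" and rg: "rank_ge Xc lt {} g"
  shows "(g, Al) \<in> ordLeq"
proof (rule ccontr)
  assume "(g, Al) \<notin> ordLeq"
  then have "(Al, g) \<in> ordLess" using not_ordLeq_iff_ordLess[OF Al_WO wg] by blast
  then obtain a where aF: "a \<in> Field g" and iso0: "(Al, Restr g (underS g a)) \<in> ordIso"
    using ordLess_iff_ordIso_Restr[OF wg Al_WO] by blast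
  obtain h where h: "iso Al (Restr g (underS g a)) h" using iso0 unfolding ordIso_def by blast
  have FR: "Field (Restr g (underS g a)) = underS g a"
  proof -
    have "Refl g" using wo_rel.REFL[unfolded wo_rel_def, OF wg] .
    then have "Field (Restr g (underS g a)) = Field g \<inter> underS g a" by (rule Refl_Field_Restr)
    moreover have "underS g a \<subseteq> Field g" unfolding underS_def by (auto intro: FieldI1)
    ultimately show ?thesis by blast
  qed
  have hb: "bij_betw h (Field Al) (underS g a)" and ho: "\<And>x y. x \<in> Field Al \<Longrightarrow> y \<in> Field Al \<Longrightarrow>
      (x, y) \<in> Al \<longleftrightarrow> (h x, h y) \<in> Restr g (underS g a)"
    using h unfolding iso_iff2 FR by auto
  have hU: "h x \<in> underS g a" if "x \<in> Field Al" for x using hb that unfolding bij_betw_def by blast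
  let ?r = "ord_plus_nat g 1"
  have wr: "Well_order ?r" using opn_WO[OF wg] .
  have T: "rank_levels Xc lt Wr (Inr (lg m)) = rank_levels Xc lt ?r (Inl a)"
  proof (rule Wr_transfer[OF wr, of "\<lambda>x. Inl (h x)"])
    fix x y assume x: "x \<in> Field Al" and y: "y \<in> Field Al"
    show "(x, y) \<in> Al \<longleftrightarrow> (Inl (h x), Inl (h y)) \<in> ?r" using ho[OF x y] hU[OF x] hU[OF y] by simp
  next
    show "inj_on (\<lambda>x. Inl (h x)) (Field Al)" using hb unfolding bij_betw_def inj_on_def by simp
  next
    show "Inl a \<notin> (\<lambda>x. Inl (h x)) ` Field Al" using hU unfolding underS_def by blast
  next
    fix x assume "x \<in> Field Al"
    then show "(Inl (h x), Inl a) \<in> ?r" using hU unfolding underS_def by simp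
  next
    show "(Inl a, Inl a) \<in> ?r" using WO_refl[OF wg aF] by simp
  next
    fix y assume y: "(y, Inl a) \<in> ?r"
    show "y \<in> (\<lambda>x. Inl (h x)) ` Field Al \<or> y = Inl a"
    proof (cases y)
      case (Inl b)
      then have ba: "(b, a) \<in> g" using y by simp
      show ?thesis
      proof (cases "b = a")
        case False
        then have "b \<in> underS g a" using ba unfolding underS_def by simp
        then obtain x where "x \<in> Field Al" "b = h x" using hb unfolding bij_betw_def by blast
        then show ?thesis using Inl by blast
      qed (use Inl in simp)
    next
      case (Inr j) then show ?thesis using y by simp
    qed
  qed
  have aT: "(Inl a, Inr 0) \<in> ?r" "Inl a \<noteq> (Inr 0 :: nat + nat)" using aF by auto
  obtain s where ps: "is_pred ?r (Inl a) s" and s0: "(s, Inr 0) \<in> ?r" using WO_succ_exists[OF wr aT] by blast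
  have "{} \<in> rank_levels Xc lt ?r (Inr 0)" using rg unfolding rank_ge_def .
  then have "{} \<in> rank_levels Xc lt ?r s" using rl_mono[OF wr s0] by blast
  then have "{} \<in> ext_step Xc lt (rank_levels Xc lt ?r (Inl a))" unfolding rl_pred[OF wr ps] .
  then have "{} \<in> ext_step Xc lt (rank_levels Xc lt Wr (Inr (lg m)))" unfolding T .
  then have "{} \<in> rank_levels Xc lt Wr (Inr (Suc (lg m)))" unfolding rl_pred[OF Wr_WO pred_top] .
  then show False using empty_not_top1 by blast
qed

lemma lower_part:
  assumes cb: "countable (Field \<beta>)"
  shows "\<exists>g0 :: nat rel. Well_order g0 \<and> (Al, g0) \<in> ordIso \<and> rank_ge Xc lt {} g0"
proof -
  have cA: "countable (Field Al)" using alpha_countable[OF w cb] .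
  define e where "e = to_nat_on (Field Al)"
  have ie: "inj_on e (Field Al)" unfolding e_def using cA by blast
  define g0 where "g0 = dir_image Al e"
  have wg0: "Well_order g0" unfolding g0_def using Well_order_dir_image[OF Al_WO ie] .
  have iso0: "(Al, g0) \<in> ordIso" unfolding g0_def using dir_image_ordIso[OF Al_WO ie] .
  have isoe: "iso Al g0 e" unfolding g0_def using dir_image_iso[OF Al_WO ie] .
  have eb: "bij_betw e (Field Al) (Field g0)" and eo: "\<And>x y. x \<in> Field Al \<Longrightarrow> y \<in> Field Al \<Longrightarrow>
      (x, y) \<in> Al \<longleftrightarrow> (e x, e y) \<in> g0"
    using isoe unfolding iso_iff2 by auto
  have eF: "e x \<in> Field g0" if "x \<in> Field Al" for x using eb that unfolding bij_betw_def by blast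
  let ?r = "ord_plus_nat g0 1"
  have wr: "Well_order ?r" using opn_WO[OF wg0] .
  have T: "rank_levels Xc lt Wr (Inr (lg m)) = rank_levels Xc lt ?r (Inr 0)"
  proof (rule Wr_transfer[OF wr, of "\<lambda>x. Inl (e x)"])
    fix x y assume x: "x \<in> Field Al" and y: "y \<in> Field Al"
    show "(x, y) \<in> Al \<longleftrightarrow> (Inl (e x), Inl (e y)) \<in> ?r" using eo[OF x y] by simp
  next
    show "inj_on (\<lambda>x. Inl (e x)) (Field Al)" using ie unfolding inj_on_def by simp
  next
    show "Inr 0 \<notin> (\<lambda>x. Inl (e x)) ` Field Al" by blast
  next
    fix x assume "x \<in> Field Al"
    then show "(Inl (e x), Inr 0) \<in> ?r" using eF by simp
  next
    show "(Inr 0, Inr 0) \<in> ?r" by simp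
  next
    fix y assume y: "(y, Inr 0) \<in> ?r"
    show "y \<in> (\<lambda>x. Inl (e x)) ` Field Al \<or> y = Inr 0"
    proof (cases y)
      case (Inl n)
      then have "n \<in> Field g0" using y by simp
      then obtain x where "x \<in> Field Al" "n = e x" using eb unfolding bij_betw_def by blast
      then show ?thesis using Inl by blast
    next
      case (Inr j) then show ?thesis using y by simp
    qed
  qed
  have "rank_ge Xc lt {} g0" unfolding rank_ge_def using T empty_top by simp
  then show ?thesis using wg0 iso0 by blast
qed

end

theorem theorem6p19:
  fixes \<beta> :: "'b rel" and m :: nat
  assumes "Well_order \<beta>" and "countable (Field \<beta>)" and "Field \<beta> \<noteq> {}"
    and "m \<ge> 1"
  shows "rank_of_is (Z_carrier (ord_times_nat (omega_exp \<beta>) m))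
                    (Z_less (ord_times_nat (omega_exp \<beta>) m))
                    (ord_plus_nat (omega_times (one_plus \<beta>)) (nat \<lfloor>log 2 (real m)\<rfloor>))"
proof -
  note w = assms(1)
  obtain y0 where y0: "y0 \<in> Field \<beta>" using assms(3) by blast
  have "\<exists>z\<in>Field \<beta>. \<forall>y. (y, z) \<in> \<beta> - Id \<longrightarrow> y \<notin> Field \<beta>"
    using wf_eq_minimal[THEN iffD1, OF WO_wf[OF w], rule_format, OF y0] .
  then obtain x0 where x0F: "x0 \<in> Field \<beta>" and x0m: "\<And>y. (y, x0) \<in> \<beta> - Id \<Longrightarrow> y \<notin> Field \<beta>" by blast
  have x0min: "(x0, y) \<in> \<beta>" if yF: "y \<in> Field \<beta>" for y
  proof -
    have "(x0, y) \<in> \<beta> \<or> (y, x0) \<in> \<beta>" using WO_total[OF w x0F yF] .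
    moreover have "(y, x0) \<in> \<beta> \<Longrightarrow> y = x0" using x0m[of y] yF by blast
    ultimately show ?thesis using WO_refl[OF w x0F] by blast
  qed
  interpret XS \<beta> m x0
    by unfold_locales (use w assms(4) x0F x0min in auto)
  have k: "nat \<lfloor>log 2 (real m)\<rfloor> = lg m" unfolding lg_def ..
  show ?thesis
    unfolding rank_of_is_def rank_is_def k
  proof (intro conjI allI impI)
    fix g :: "nat rel" assume "Well_order g" "rank_ge Xc lt {} g"
    then show "(g, Al) \<in> ordLeq" by (rule upper_part)
  next
    fix d :: "nat rel" assume wd: "Well_order d" and H: "\<forall>g :: nat rel. Well_order g \<longrightarrow> rank_ge Xc lt {} g \<longrightarrow> (g, d) \<in> ordLeq"
    obtain g0 :: "nat rel" where g0: "Well_order g0" "(Al, g0) \<in> ordIso" "rank_ge Xc lt {} g0"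
      using lower_part[OF assms(2)] by blast
    have "(g0, d) \<in> ordLeq" using H g0 by blast
    then show "(Al, d) \<in> ordLeq" using ordIso_ordLeq_trans[OF g0(2)] by blast
  qed
qed

end
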